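(* In the BICM setting described in the context, with message $1$ transmitted and $\mathsf D$ the CDF-ORBGRAND metric, for any $w'\ne1$ and any $\theta<0$, almost surely $$\lim_{N\to\infty}\frac1N\ln\mathbb E\big\{e^{N\theta\mathsf D(w')}\,\big|\,\underline{\mathsf T}\big\}=\sum_{j=1}^m\mathbb E\Big[\ln\Big(1+e^{\frac\theta m|\ln(q_j^+(\mathsf Y)/q_j^-(\mathsf Y))|}\Big)\Big]-m\ln2.$$ Here, in the $j$-th term, $\mathsf Y$ has density $(q_j^++q_j^-)/2$.
   Context: Let $m\ge1$, let $\mathcal S$ be a constellation with $|\mathcal S|=2^m$, and let $\mu:\{+1,-1\}^m\to\mathcal S$ be a bijective labeling. For $s\in\mathcal S$, let $b_j(s)$ be the $j$-th coordinate of $\mu^{-1}(s)$. The channel is memoryless with output space $\mathbb R^d$ (norm $|\cdot|$) and transition densities $p(y\mid s)$. For $j=1,\dots,m$ define $$q_j^\pm(y)=2^{-(m-1)}\sum_{s:\,b_j(s)=\pm1}p(y\mid s).$$ For each $j$, let $\mathsf X_j$ be uniform on $\{\pm1\}$ and let $\mathsf Y$ have density $q_j^{\mathsf X_j}$ given $\mathsf X_j$. Let $\Psi_j$ be the CDF of $|\ln(q_j^+(\mathsf Y)/q_j^-(\mathsf Y))|$, and let $\bar\Psi=\frac1m\sum_j\Psi_j$. Assume that for each $j$: (A1) there exist $M_1>0$, $a>0$ and a polynomial $S_1$ with $q_j^\pm(y)<S_1(|y|)e^{-a|y|}$ for $|y|>M_1$; (A2) there exist $M_2>0$ and a polynomial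 $S_2$ with $|\ln(q_j^+(y)/q_j^-(y))|<S_2(|y|)$ for $|y|>M_2$; (A3) $\Psi_j$, $\Psi_j^{-1}$, $\bar\Psi$ and $\bar\Psi^{-1}$ are smooth with finite first, second and third derivatives. Random coding: the codebook has $\lceil e^{NR}\rceil$ codewords, each consisting of bits $\mathsf X_{i,j}(w)$, $i\le N$, $j\le m$, all i.i.d. uniform on $\{\pm1\}$. Message $1$ is transmitted. Symbol $i$ is $s_i(1)=\mu(\mathsf X_{i,1}(1),\dots,\mathsf X_{i,m}(1))$, and the outputs $\mathsf Y_i$ are conditionally independent with densities $p(\cdot\mid s_i(1))$. Let $\mathsf T_{i,j}=\ln(q_j^+(\mathsf Y_i)/q_j^-(\mathsf Y_i))$, and let $\underline{\mathsf T}$ be the collection of all $\mathsf T_{i,j}$. Let $\mathsf R_{i,j}$ be the rank of $|\mathsf T_{i,j}|$ among all $mN$ values (rank $1$ is the smallest). Let $\mathrm{sgn}(t)=1$ if $t\ge0$ and $-1$ otherwise. The CDF-ORBGRAND metric is $$\mathsf D(w)=\frac1{mN}\sum_{i,j}\bar\Psi^{-1}\Big(\frac{\mathsf R_{i,j}}{mN+1}\Big)\mathbf 1\big(\mathrm{sgn}(\mathsf T_{i,j})\mathsf X_{i,j}(w)<0\big).$$ *)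

theory Defs
  imports "HOL-Probability.Probability" "HOL-Computational_Algebra.Polynomial"
begin

definition label_set :: "nat \<Rightarrow> (nat \<Rightarrow> real) set" where
  "label_set m = PiE {1..m} (\<lambda>_. {-1, 1})"

definition bitlab :: "nat \<Rightarrow> ((nat \<Rightarrow> real) \<Rightarrow> 's) \<Rightarrow> 's \<Rightarrow> nat \<Rightarrow> real" where
  "bitlab m mu s j = inv_into (label_set m) mu s j"

definition qbit :: "nat \<Rightarrow> ((nat \<Rightarrow> real) \<Rightarrow> 's) \<Rightarrow> 's set \<Rightarrow> ('s \<Rightarrow> 'y \<Rightarrow> real)
    \<Rightarrow> nat \<Rightarrow> real \<Rightarrow> 'y \<Rightarrow> real" where
  "qbit m mu S p j \<sigma> y = (1 / 2 ^ (m - 1)) * (\<Sum>s\<in>{s\<in>S. bitlab m mu s j = \<sigma>}. p s y)"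

definition llr :: "nat \<Rightarrow> ((nat \<Rightarrow> real) \<Rightarrow> 's) \<Rightarrow> 's set \<Rightarrow> ('s \<Rightarrow> 'y \<Rightarrow> real)
    \<Rightarrow> nat \<Rightarrow> 'y \<Rightarrow> real" where
  "llr m mu S p j y = ln (qbit m mu S p j 1 y / qbit m mu S p j (-1) y)"

text \<open>Psi_j: CDF of |ln(q_j^+(Y)/q_j^-(Y))| where X_j is uniform on {+1,-1} and Y has
  density q_j^{X_j} given X_j, i.e. Y has density (q_j^+ + q_j^-)/2.\<close>
definition Psi :: "nat \<Rightarrow> ((nat \<Rightarrow> real) \<Rightarrow> 's) \<Rightarrow> 's set \<Rightarrow> ('s \<Rightarrow> 'y::euclidean_space \<Rightarrow> real)
    \<Rightarrow> nat \<Rightarrow> real \<Rightarrow> real" where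
  "Psi m mu S p j t =
     measure (density lborel (\<lambda>y. ennreal ((qbit m mu S p j 1 y + qbit m mu S p j (-1) y) / 2)))
       {y. \<bar>llr m mu S p j y\<bar> \<le> t}"

definition Psibar :: "nat \<Rightarrow> ((nat \<Rightarrow> real) \<Rightarrow> 's) \<Rightarrow> 's set \<Rightarrow> ('s \<Rightarrow> 'y::euclidean_space \<Rightarrow> real)
    \<Rightarrow> real \<Rightarrow> real" where
  "Psibar m mu S p t = (1 / real m) * (\<Sum>j=1..m. Psi m mu S p j t)"

definition cdf_core :: "(real \<Rightarrow> real) \<Rightarrow> real set" where
  "cdf_core F = {t. 0 < t \<and> 0 < F t \<and> F t < 1}"

definition cdf_inv :: "(real \<Rightarrow> real) \<Rightarrow> real \<Rightarrow> real" where
  "cdf_inv F = the_inv_into (cdf_core F) F"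

definition smooth_on :: "real set \<Rightarrow> (real \<Rightarrow> real) \<Rightarrow> bool" where
  "smooth_on S f \<longleftrightarrow> (\<forall>k. \<forall>x\<in>S. ((deriv ^^ k) f) field_differentiable (at x))"

definition A3 :: "(real \<Rightarrow> real) \<Rightarrow> bool" where
  "A3 F \<longleftrightarrow> bij_betw F (cdf_core F) {0<..<1} \<and> smooth_on {0<..} F \<and> smooth_on {0<..<1} (cdf_inv F)"

definition sgn1 :: "real \<Rightarrow> real" where
  "sgn1 t = (if t \<ge> 0 then 1 else -1)"

text \<open>Rank (1 = smallest) of v k among the values v k', k' in I; ties broken
  lexicographically by index (ties occur with probability zero in the intended setting).\<close>
definition rank :: "(nat \<times> nat) set \<Rightarrow> (nat \<times> nat \<Rightarrow> real) \<Rightarrow> nat \<times> nat \<Rightarrow> nat" where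
  "rank I v k = Suc (card {k'\<in>I. v k' < v k \<or>
      (v k' = v k \<and> (fst k' < fst k \<or> (fst k' = fst k \<and> snd k' < snd k)))})"

text \<open>CDF-ORBGRAND metric of the codeword with bits Wb (Wb i j = X_{i,j}(w')), given the
  LLRs T (T i j = T_{i,j}), for block length N.\<close>
definition orbgrand_metric :: "nat \<Rightarrow> (real \<Rightarrow> real) \<Rightarrow> nat \<Rightarrow> (nat \<Rightarrow> nat \<Rightarrow> real)
    \<Rightarrow> (nat \<Rightarrow> nat \<Rightarrow> real) \<Rightarrow> real" where
  "orbgrand_metric m Pbar N T Wb =
     (let I = {1..N} \<times> {1..m} in
      (1 / (real m * real N)) *
        (\<Sum>(i,j)\<in>I. cdf_inv Pbar (real (rank I (\<lambda>(i',j'). \<bar>T i' j'\<bar>) (i,j)) / (real m * real N + 1))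
                     * (if sgn1 (T i j) * Wb i j < 0 then 1 else 0)))"

end

theory Submission
  imports Defs
begin

definition lexlt :: "(nat \<times> nat \<Rightarrow> real) \<Rightarrow> nat \<times> nat \<Rightarrow> nat \<times> nat \<Rightarrow> bool" where
  "lexlt v a b \<longleftrightarrow> v a < v b \<or> (v a = v b \<and> (fst a < fst b \<or> (fst a = fst b \<and> snd a < snd b)))"

lemma rank_lexlt: "rank I v k = Suc (card {k'\<in>I. lexlt v k' k})"
  unfolding rank_def lexlt_def by simp

lemma lexlt_trans: "lexlt v a b \<Longrightarrow> lexlt v b c \<Longrightarrow> lexlt v a c"
  unfolding lexlt_def by auto

lemma lexlt_irrefl: "\<not> lexlt v a a"
  unfolding lexlt_def by auto

lemma lexlt_total: "a \<noteq> b \<Longrightarrow> lexlt v a b \<or> lexlt v b a"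
  unfolding lexlt_def by (cases a; cases b) auto

lemma rank_less:
  assumes "finite I" "a \<in> I" "lexlt v a b"
  shows "rank I v a < rank I v b"
proof -
  have "{k'\<in>I. lexlt v k' a} \<subset> {k'\<in>I. lexlt v k' b}"
    using assms lexlt_trans lexlt_irrefl by blast
  then have "card {k'\<in>I. lexlt v k' a} < card {k'\<in>I. lexlt v k' b}"
    using assms(1) by (intro psubset_card_mono) auto
  then show ?thesis by (simp add: rank_lexlt)
qed

lemma rank_bij:
  assumes "finite I"
  shows "bij_betw (rank I v) I {1..card I}"
proof -
  have inj: "inj_on (rank I v) I"
  proof (rule inj_onI)
    fix a b assume ab: "a \<in> I" "b \<in> I" "rank I v a = rank I v b"
    show "a = b"
    proof (rule ccontr)
      assume "a \<noteq> b"
      then have "lexlt v a b \<or> lexlt v b a" by (rule lexlt_total)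
      then show False using rank_less[OF assms ab(1), of v b] rank_less[OF assms ab(2), of v a] ab(3) by auto
    qed
  qed
  have sub: "rank I v ` I \<subseteq> {1..card I}"
  proof
    fix x assume "x \<in> rank I v ` I"
    then obtain k where k: "k \<in> I" "x = rank I v k" by auto
    have "{k'\<in>I. lexlt v k' k} \<subseteq> I - {k}" using lexlt_irrefl by auto
    then have "card {k'\<in>I. lexlt v k' k} \<le> card (I - {k})"
      using assms by (intro card_mono) auto
    also have "\<dots> = card I - 1" using k assms by simp
    finally show "x \<in> {1..card I}" using k assms card_gt_0_iff[of I]
      by (auto simp: rank_lexlt)
  qed
  have "card (rank I v ` I) = card {1..card I}"
    using inj by (simp add: card_image)
  then have "rank I v ` I = {1..card I}"
    using sub by (intro card_subset_eq) auto
  then show ?thesis using inj by (simp add: bij_betw_def)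
qed

lemma emeasure_lborel_Ico_finite: "emeasure lborel {a..<b::real} < \<infinity>"
  by (cases "a \<le> b") auto

lemma emeasure_lborel_Ioo_finite: "emeasure lborel {a<..<b::real} < \<infinity>"
  by (cases "a \<le> b") auto

lemma riemann_antimono:
  fixes \<phi> :: "real \<Rightarrow> real" and B :: real
  assumes cont: "continuous_on {0<..<1} \<phi>"
    and mono: "\<And>u v. 0 < u \<Longrightarrow> u \<le> v \<Longrightarrow> v < 1 \<Longrightarrow> \<phi> v \<le> \<phi> u"
    and bnd: "\<And>u. 0 < u \<Longrightarrow> u < 1 \<Longrightarrow> \<bar>\<phi> u\<bar> \<le> B"
  shows "(\<lambda>M. (\<Sum>k=1..M. \<phi> (real k / (real M + 1))) / real M)
           \<longlonglongrightarrow> (\<integral>x. indicator {0<..<1} x * \<phi> x \<partial>lborel)"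
proof -
  define \<phi>0 where "\<phi>0 x = indicator {0<..<1::real} x * \<phi> x" for x
  have m0[measurable]: "\<phi>0 \<in> borel_measurable borel"
    unfolding \<phi>0_def using borel_measurable_continuous_on_indicator[OF _ cont] by simp
  have b0: "\<bar>\<phi>0 x\<bar> \<le> B" for x
    using bnd[of x] bnd[of "1/2"] by (auto simp: \<phi>0_def indicator_def)
  have B0: "0 \<le> B" using bnd[of "1/2"] by simp
  define J where "J a b = (\<integral>x. indicator {a..<b} x * \<phi>0 x \<partial>lborel)" for a b :: real
  have intJ: "integrable lborel (\<lambda>x. indicator {a..<b} x * \<phi>0 x)" for a b :: real
    using integrableI_bounded_set_indicator[of "{a..<b}" lborel \<phi>0 B] b0 emeasure_lborel_Ico_finite[of a b] by auto
  have intIc: "integrable lborel (\<lambda>x. indicator {a..<b} x * c)" for a b c :: real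
    using integrable_real_indicator[of "{a..<b}" lborel] emeasure_lborel_Ico_finite[of a b]
    by (intro integrable_mult_left) auto
  have intIo: "integrable lborel (\<lambda>x. indicator {a<..<b} x * c)" for a b c :: real
    using integrable_real_indicator[of "{a<..<b}" lborel] emeasure_lborel_Ioo_finite[of a b]
    by (intro integrable_mult_left) auto
  have addJ: "J a c = J a b + J b c" if "a \<le> b" "b \<le> c" for a b c
  proof -
    have "\<And>x. indicator {a..<c} x * \<phi>0 x = indicator {a..<b} x * \<phi>0 x + indicator {b..<c} x * \<phi>0 x"
      using that by (auto simp: indicator_def)
    then show ?thesis unfolding J_def
      by (simp add: Bochner_Integration.integral_add[OF intJ intJ])
  qed
  have intc: "(\<integral>x. indicator {a..<b} x * c \<partial>lborel) = (b - a) * c" if "a \<le> b" for a b c :: real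
    using that by (simp add: emeasure_lborel_Ico_finite)
  have lowJ: "(b - a) * \<phi> b \<le> J a b" if "0 < a" "a \<le> b" "b < 1" for a b
  proof -
    have "(b - a) * \<phi> b = (\<integral>x. indicator {a..<b} x * \<phi> b \<partial>lborel)" using intc that by simp
    also have "\<dots> \<le> J a b" unfolding J_def
      apply (rule integral_mono)
      using intJ intIc
      apply auto[2]
      using that mono by (auto simp: indicator_def \<phi>0_def)
    finally show ?thesis .
  qed
  have upJ: "J a b \<le> (b - a) * \<phi> a" if "0 < a" "a \<le> b" "b < 1" for a b
  proof -
    have "J a b \<le> (\<integral>x. indicator {a..<b} x * \<phi> a \<partial>lborel)" unfolding J_def
      apply (rule integral_mono)
      using intJ intIc
      apply auto[2]
      using that mono by (auto simp: indicator_def \<phi>0_def)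
    also have "\<dots> = (b - a) * \<phi> a" using intc that by simp
    finally show ?thesis .
  qed
  define I where "I = (\<integral>x. indicator {0<..<1} x * \<phi> x \<partial>lborel)"
  have I0: "I = (\<integral>x. \<phi>0 x \<partial>lborel)" unfolding I_def \<phi>0_def ..
  have Iclose: "\<bar>I - J a b\<bar> \<le> B * (a + (1 - b))" if "0 < a" "a \<le> b" "b \<le> 1" for a b
  proof -
    have "integrable lborel (\<lambda>x. indicator {0<..<1::real} x * \<phi>0 x)"
      using integrableI_bounded_set_indicator[of "{0<..<1}" lborel \<phi>0 B] b0 emeasure_lborel_Ioo_finite[of 0 1] by auto
    moreover have "(\<lambda>x. indicator {0<..<1::real} x * \<phi>0 x) = \<phi>0"
      by (auto simp: \<phi>0_def indicator_def fun_eq_iff)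
    ultimately have int0: "integrable lborel \<phi>0" by simp
    have "I - J a b = (\<integral>x. \<phi>0 x - indicator {a..<b} x * \<phi>0 x \<partial>lborel)"
      unfolding I0 J_def by (simp add: Bochner_Integration.integral_diff[OF int0 intJ])
    also have "\<dots> = (\<integral>x. (indicator {0<..<a} x + indicator {b..<1} x) * \<phi>0 x \<partial>lborel)"
      using that by (intro Bochner_Integration.integral_cong) (auto simp: indicator_def \<phi>0_def)
    finally have eq: "I - J a b = \<dots>" .
    have "\<bar>\<integral>x. (indicator {0<..<a} x + indicator {b..<1} x) * \<phi>0 x \<partial>lborel\<bar>
        \<le> (\<integral>x. \<bar>(indicator {0<..<a} x + indicator {b..<1} x) * \<phi>0 x\<bar> \<partial>lborel)"
      by (rule integral_abs_bound)
    also have "\<dots> \<le> (\<integral>x. (indicator {0<..<a} x + indicator {b..<1} x) * B \<partial>lborel)"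
    proof (rule integral_mono)
      show "integrable lborel (\<lambda>x. (indicator {0<..<a} x + indicator {b..<1} x) * B)"
        by (auto simp: distrib_right intro!: Bochner_Integration.integrable_add intIc intIo)
      show "integrable lborel (\<lambda>x. \<bar>(indicator {0<..<a} x + indicator {b..<1} x) * \<phi>0 x\<bar>)"
        apply (rule integrable_abs)
        using integrableI_bounded_set_indicator[of "{0<..<a}" lborel \<phi>0 B] b0 emeasure_lborel_Ioo_finite[of 0 a]
        by (auto simp: distrib_right intro!: Bochner_Integration.integrable_add intJ)
      fix x show "\<bar>(indicator {0<..<a} x + indicator {b..<1} x) * \<phi>0 x\<bar> \<le> (indicator {0<..<a} x + indicator {b..<1} x) * B"
        using b0[of x] by (auto simp: indicator_def abs_mult)
    qed
    also have "\<dots> = B * (a + (1 - b))"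
      using that by (simp add: distrib_right Bochner_Integration.integral_add[OF intIo intIc] algebra_simps)
    finally show ?thesis using eq by simp
  qed
  have key: "\<bar>(\<Sum>k=1..M. \<phi> (real k / (real M + 1))) / real M - I\<bar> \<le> 4 * B / real M"
    if M1: "M \<ge> 1" for M :: nat
  proof -
    define h where "h = 1 / (real M + 1)"
    define x where "x k = real k * h" for k :: nat
    have hpos: "0 < h" unfolding h_def by simp
    have xin: "0 < x k \<and> x k < 1" if "1 \<le> k" "k \<le> M" for k
      using that unfolding x_def h_def by (auto simp: field_simps)
    have xstep: "x (Suc k) - x k = h" for k unfolding x_def by (simp add: algebra_simps)
    have xmono: "x k \<le> x l" if "k \<le> l" for k l
      unfolding x_def using that hpos by (simp add: mult_right_mono)
    define S where "S = (\<Sum>k=1..M. \<phi> (x k))"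
    have S_eq: "(\<Sum>k=1..M. \<phi> (real k / (real M + 1))) = S"
      unfolding S_def x_def h_def by simp
    have chain: "(\<Sum>k\<in>{1..<n}. J (x k) (x (Suc k))) = J (x 1) (x n)" if "1 \<le> n" for n
      using that
    proof (induction n rule: dec_induct)
      case base
      have "J (x 1) (x 1) = 0" unfolding J_def by simp
      then show ?case by simp
    next
      case (step n)
      then show ?case using addJ[of "x 1" "x n" "x (Suc n)"] xmono[of 1 n] xmono[of n "Suc n"]
        by simp
    qed
    have sumB: "\<bar>S\<bar> \<le> real M * B"
    proof -
      have "\<bar>S\<bar> \<le> (\<Sum>k=1..M. \<bar>\<phi> (x k)\<bar>)" unfolding S_def by (rule sum_abs)
      also have "\<dots> \<le> (\<Sum>k=1..M. B)" using xin bnd by (intro sum_mono) auto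
      finally show ?thesis by simp
    qed
    have low: "J (x 1) (x M) - h * B \<le> h * S"
    proof -
      have "J (x 1) (x M) = (\<Sum>k\<in>{1..<M}. J (x k) (x (Suc k)))" using chain M1 by simp
      also have "\<dots> \<le> (\<Sum>k\<in>{1..<M}. h * \<phi> (x k))"
      proof (rule sum_mono)
        fix k assume k: "k \<in> {1..<M}"
        then show "J (x k) (x (Suc k)) \<le> h * \<phi> (x k)"
          using upJ[of "x k" "x (Suc k)"] xin[of k] xin[of "Suc k"] xmono[of k "Suc k"] xstep[of k]
          by auto
      qed
      finally have 1: "J (x 1) (x M) \<le> h * (\<Sum>k\<in>{1..<M}. \<phi> (x k))" by (simp add: sum_distrib_left)
      have "S = (\<Sum>k\<in>{1..<M}. \<phi> (x k)) + \<phi> (x M)"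
        unfolding S_def using M1 by (simp add: atLeastLessThanSuc_atLeastAtMost[symmetric] sum.atLeast_Suc_lessThan)
      moreover have "- B \<le> \<phi> (x M)" using bnd[of "x M"] xin[of M] M1 by auto
      then have "h * (- B) \<le> h * \<phi> (x M)" using hpos by (intro mult_left_mono) auto
      ultimately show ?thesis using 1 by (simp add: algebra_simps)
    qed
    have up: "h * S \<le> J (x 1) (x M) + h * B"
    proof -
      have "(\<Sum>k\<in>{1..<M}. h * \<phi> (x (Suc k))) \<le> (\<Sum>k\<in>{1..<M}. J (x k) (x (Suc k)))"
      proof (rule sum_mono)
        fix k assume k: "k \<in> {1..<M}"
        then show "h * \<phi> (x (Suc k)) \<le> J (x k) (x (Suc k))"
          using lowJ[of "x k" "x (Suc k)"] xin[of k] xin[of "Suc k"] xmono[of k "Suc k"] xstep[of k]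
          by auto
      qed
      also have "\<dots> = J (x 1) (x M)" using chain M1 by simp
      finally have 1: "h * (\<Sum>k\<in>{1..<M}. \<phi> (x (Suc k))) \<le> J (x 1) (x M)" by (simp add: sum_distrib_left)
      have "S = \<phi> (x 1) + (\<Sum>k\<in>{1..<M}. \<phi> (x (Suc k)))"
      proof -
        have "S = \<phi> (x 1) + (\<Sum>k=Suc 1..M. \<phi> (x k))"
          unfolding S_def using M1 by (simp add: sum.atLeast_Suc_atMost)
        also have "(\<Sum>k=Suc 1..M. \<phi> (x k)) = (\<Sum>k\<in>{1..<M}. \<phi> (x (Suc k)))"
        proof -
          have "{Suc 1..M} = {Suc 1..<Suc M}" by auto
          then show ?thesis by (simp only: sum.shift_bounds_Suc_ivl)
        qed
        finally show ?thesis .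
      qed
      moreover have "\<phi> (x 1) \<le> B" using bnd[of "x 1"] xin[of 1] M1 by auto
      then have "h * \<phi> (x 1) \<le> h * B" using hpos by (intro mult_left_mono) auto
      ultimately show ?thesis using 1 by (simp add: algebra_simps)
    qed
    have xM: "x M = 1 - h" unfolding x_def h_def by (simp add: field_simps)
    have x1: "x 1 = h" unfolding x_def by simp
    have IJ: "\<bar>I - J (x 1) (x M)\<bar> \<le> B * (2 * h)"
      using Iclose[of "x 1" "x M"] xin[of 1] xin[of M] M1 xmono[of 1 M] xM x1 by auto
    have d1: "\<bar>h * S - I\<bar> \<le> 3 * h * B" using low up IJ by (simp add: abs_le_iff algebra_simps)
    have "\<bar>S / real M - h * S\<bar> = \<bar>S\<bar> * (1 / real M - h)"
    proof -
      have "1 / real M - h \<ge> 0" unfolding h_def using M1 by (simp add: field_simps)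
      moreover have "S / real M - h * S = S * (1 / real M - h)" by (simp add: algebra_simps)
      ultimately show ?thesis by (simp add: abs_mult)
    qed
    also have "\<dots> \<le> real M * B * (1 / real M - h)"
      using sumB M1 unfolding h_def by (intro mult_right_mono) (auto simp: field_simps)
    also have "\<dots> = h * B"
    proof -
      have Mp: "real M > 0" using M1 by simp
      have "1 / real M - 1 / (real M + 1) = 1 / (real M * (real M + 1))" using Mp by (simp add: field_simps)
      then show ?thesis unfolding h_def using Mp by simp
    qed
    finally have d2: "\<bar>S / real M - h * S\<bar> \<le> h * B" .
    have "\<bar>S / real M - I\<bar> \<le> 4 * h * B" using d1 d2 by (simp add: abs_le_iff algebra_simps)
    also have "\<dots> \<le> 4 * B / real M" unfolding h_def using M1 B0 by (simp add: field_simps)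
    finally show ?thesis using S_eq by simp
  qed
  have "(\<lambda>M. (\<Sum>k=1..M. \<phi> (real k / (real M + 1))) / real M - I) \<longlonglongrightarrow> 0"
  proof (rule Lim_null_comparison)
    show "\<forall>\<^sub>F M in sequentially. norm ((\<Sum>k=1..M. \<phi> (real k / (real M + 1))) / real M - I) \<le> 4 * B / real M"
      using eventually_ge_at_top[of "1::nat"] by (rule eventually_mono) (use key in simp)
    show "(\<lambda>M. 4 * B / real M) \<longlonglongrightarrow> 0"
      by (rule tendsto_divide_0[OF tendsto_const]) (rule filterlim_at_top_imp_at_infinity[OF filterlim_real_sequentially])
  qed
  then show ?thesis unfolding I_def by (simp add: LIM_zero_cancel)
qed

lemma sum_PiE_prod_prod:
  fixes F :: "nat \<Rightarrow> nat \<Rightarrow> real \<Rightarrow> real"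
  assumes "finite A" "finite B" "finite S"
  shows "(\<Sum>z\<in>PiE A (\<lambda>_. PiE B (\<lambda>_. S)). \<Prod>i\<in>A. \<Prod>j\<in>B. F i j (z i j))
       = (\<Prod>i\<in>A. \<Prod>j\<in>B. \<Sum>x\<in>S. F i j x)"
proof -
  have "(\<Prod>i\<in>A. \<Prod>j\<in>B. \<Sum>x\<in>S. F i j x) = (\<Prod>i\<in>A. \<Sum>g\<in>PiE B (\<lambda>_. S). \<Prod>j\<in>B. F i j (g j))"
    using assms by (intro prod.cong refl prod_sum_PiE) auto
  also have "\<dots> = (\<Sum>z\<in>PiE A (\<lambda>_. PiE B (\<lambda>_. S)). \<Prod>i\<in>A. \<Prod>j\<in>B. F i j (z i j))"
    using assms by (subst prod_sum_PiE) (auto intro!: finite_PiE)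
  finally show ?thesis ..
qed

lemma sum_pm1: "(\<Sum>x\<in>{-1,1::real}. f x) = f (-1) + f 1"
  by simp

lemma cond_sum:
  fixes m N :: nat and \<theta> :: real and Pbar :: "real \<Rightarrow> real" and T :: "nat \<Rightarrow> nat \<Rightarrow> real"
  assumes m: "m \<ge> 1" and N: "N \<ge> 1"
  defines "I \<equiv> {1..N} \<times> {1..m}"
  shows "(\<Sum>z\<in>PiE {1..N} (\<lambda>_. label_set m). exp (real N * \<theta> * orbgrand_metric m Pbar N T (\<lambda>i j. z i j)))
       = (\<Prod>k\<in>{1..N*m}. 1 + exp (\<theta> / real m * cdf_inv Pbar (real k / (real m * real N + 1))))"
proof -
  define v where "v = (\<lambda>(i'::nat, j'::nat). \<bar>T i' j'\<bar>)"
  define a where "a i j = cdf_inv Pbar (real (rank I v (i, j)) / (real m * real N + 1))" for i j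
  define F where "F i j x = exp (\<theta> / real m * a i j * (if sgn1 (T i j) * x < 0 then 1 else 0))" for i j and x :: real
  have expand: "exp (real N * \<theta> * orbgrand_metric m Pbar N T z) = (\<Prod>i\<in>{1..N}. \<Prod>j\<in>{1..m}. F i j (z i j))" for z
  proof -
    have "real N * \<theta> * orbgrand_metric m Pbar N T z
        = (\<Sum>(i,j)\<in>I. \<theta> / real m * a i j * (if sgn1 (T i j) * z i j < 0 then 1 else 0))"
      using m N unfolding orbgrand_metric_def Let_def I_def[symmetric] a_def v_def
      by (simp add: sum_distrib_left case_prod_unfold field_simps)
    then have "exp (real N * \<theta> * orbgrand_metric m Pbar N T z) = (\<Prod>(i,j)\<in>I. F i j (z i j))"
      by (simp add: exp_sum F_def case_prod_unfold I_def)
    also have "\<dots> = (\<Prod>i\<in>{1..N}. \<Prod>j\<in>{1..m}. F i j (z i j))"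
      unfolding I_def by (simp add: prod.cartesian_product)
    finally show ?thesis .
  qed
  have "(\<Sum>z\<in>PiE {1..N} (\<lambda>_. label_set m). exp (real N * \<theta> * orbgrand_metric m Pbar N T (\<lambda>i j. z i j)))
      = (\<Sum>z\<in>PiE {1..N} (\<lambda>_. PiE {1..m} (\<lambda>_. {-1,1})). \<Prod>i\<in>{1..N}. \<Prod>j\<in>{1..m}. F i j (z i j))"
    unfolding label_set_def using expand by simp
  also have "\<dots> = (\<Prod>i\<in>{1..N}. \<Prod>j\<in>{1..m}. \<Sum>x\<in>{-1,1}. F i j x)"
    by (rule sum_PiE_prod_prod) auto
  also have "\<dots> = (\<Prod>i\<in>{1..N}. \<Prod>j\<in>{1..m}. 1 + exp (\<theta> / real m * a i j))"
    by (intro prod.cong refl) (auto simp: F_def sgn1_def)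
  also have "\<dots> = (\<Prod>(i,j)\<in>I. 1 + exp (\<theta> / real m * a i j))"
    unfolding I_def by (simp add: prod.cartesian_product)
  also have "\<dots> = (\<Prod>k\<in>{1..N*m}. 1 + exp (\<theta> / real m * cdf_inv Pbar (real k / (real m * real N + 1))))"
  proof -
    have "finite I" unfolding I_def by simp
    from rank_bij[OF this, of v] have "bij_betw (rank I v) I {1..N*m}"
      unfolding I_def by simp
    then show ?thesis unfolding a_def
      by (subst prod.reindex_bij_betw[symmetric, where h="rank I v"]) (auto simp: case_prod_unfold)
  qed
  finally show ?thesis .
qed

lemma rank_real:
  assumes fin: "finite I"
  shows "real (rank I v k) = 1 + (\<Sum>k'\<in>I. if lexlt v k' k then 1 else 0)"
proof -
  have "real (card {k'\<in>I. lexlt v k' k}) = (\<Sum>k'\<in>{k'\<in>I. lexlt v k' k}. 1)" by simp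
  also have "\<dots> = (\<Sum>k'\<in>I. if lexlt v k' k then 1 else 0)" by (rule sum.inter_filter[OF fin])
  finally show ?thesis by (simp add: rank_lexlt)
qed

lemma rank_frac:
  assumes "m \<ge> 1" "N \<ge> 1" "k \<in> {1..N} \<times> {1..m}"
  shows "0 < real (rank ({1..N} \<times> {1..m}) v k) / (real m * real N + 1)"
    and "real (rank ({1..N} \<times> {1..m}) v k) / (real m * real N + 1) < 1"
proof -
  have "rank ({1..N} \<times> {1..m}) v k \<in> {1..card ({1..N} \<times> {1..m})}"
    using rank_bij[of "{1..N} \<times> {1..m}" v] assms(3) by (auto simp: bij_betw_def)
  then have r: "1 \<le> rank ({1..N} \<times> {1..m}) v k" "rank ({1..N} \<times> {1..m}) v k \<le> N * m" by auto
  then have "real (rank ({1..N} \<times> {1..m}) v k) \<le> real m * real N" by (simp add: mult.commute of_nat_mult[symmetric] del: of_nat_mult)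
  then show "real (rank ({1..N} \<times> {1..m}) v k) / (real m * real N + 1) < 1" by simp
  have "0 \<le> real m * real N" by simp
  then have "0 < real m * real N + 1" by linarith
  then show "0 < real (rank ({1..N} \<times> {1..m}) v k) / (real m * real N + 1)" using r by (intro divide_pos_pos) auto
qed

lemma orb_meas:
  fixes T Z :: "'a \<Rightarrow> nat \<Rightarrow> nat \<Rightarrow> real"
  assumes m: "m \<ge> 1" and N: "N \<ge> 1"
    and Qc: "continuous_on {0<..<1} (cdf_inv Pbar)"
    and Tm: "\<And>i j. i \<in> {1..N} \<Longrightarrow> j \<in> {1..m} \<Longrightarrow> (\<lambda>\<omega>. T \<omega> i j) \<in> borel_measurable M"
    and Zm: "\<And>i j. i \<in> {1..N} \<Longrightarrow> j \<in> {1..m} \<Longrightarrow> (\<lambda>\<omega>. Z \<omega> i j) \<in> borel_measurable M"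
  shows "(\<lambda>\<omega>. orbgrand_metric m Pbar N (T \<omega>) (Z \<omega>)) \<in> borel_measurable M"
proof -
  define I where "I = {1..N} \<times> {1..m}"
  have fI: "finite I" unfolding I_def by simp
  define Q' where "Q' u = indicator {0<..<1::real} u *\<^sub>R cdf_inv Pbar u" for u
  have Q'm[measurable]: "Q' \<in> borel_measurable borel"
    unfolding Q'_def by (rule borel_measurable_continuous_on_indicator[OF _ Qc]) simp
  define v where "v \<omega> = (\<lambda>(i'::nat, j'::nat). \<bar>T \<omega> i' j'\<bar>)" for \<omega>
  have vm: "(\<lambda>\<omega>. v \<omega> k) \<in> borel_measurable M" if "k \<in> I" for k
  proof -
    obtain a b where kab: "k = (a, b)" by force
    then have "a \<in> {1..N}" "b \<in> {1..m}" using that unfolding I_def by auto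
    then have "(\<lambda>\<omega>. \<bar>T \<omega> a b\<bar>) \<in> borel_measurable M" using Tm by (intro borel_measurable_abs) auto
    moreover have "(\<lambda>\<omega>. v \<omega> k) = (\<lambda>\<omega>. \<bar>T \<omega> a b\<bar>)" by (simp add: v_def kab)
    ultimately show ?thesis by simp
  qed
  have sgnm: "sgn1 \<in> borel_measurable borel"
    unfolding sgn1_def by measurable
  have term_eq: "(\<lambda>\<omega>. orbgrand_metric m Pbar N (T \<omega>) (Z \<omega>))
     = (\<lambda>\<omega>. (1 / (real m * real N)) * (\<Sum>k\<in>I.
         Q' ((1 + (\<Sum>k'\<in>I. if lexlt (v \<omega>) k' k then 1 else 0)) / (real m * real N + 1))
         * (if sgn1 (T \<omega> (fst k) (snd k)) * Z \<omega> (fst k) (snd k) < 0 then 1 else 0)))"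
  proof (rule ext)
    fix \<omega>
    show "orbgrand_metric m Pbar N (T \<omega>) (Z \<omega>) = (1 / (real m * real N)) * (\<Sum>k\<in>I.
         Q' ((1 + (\<Sum>k'\<in>I. if lexlt (v \<omega>) k' k then 1 else 0)) / (real m * real N + 1))
         * (if sgn1 (T \<omega> (fst k) (snd k)) * Z \<omega> (fst k) (snd k) < 0 then 1 else 0))"
      unfolding orbgrand_metric_def Let_def I_def[symmetric]
    proof (intro arg_cong2[where f="(*)"] refl sum.cong)
      fix k assume k: "k \<in> I"
      have r: "real (rank I (v \<omega>) k) = 1 + (\<Sum>k'\<in>I. if lexlt (v \<omega>) k' k then 1 else 0)"
        by (rule rank_real[OF fI])
      have "0 < real (rank I (v \<omega>) k) / (real m * real N + 1)" "real (rank I (v \<omega>) k) / (real m * real N + 1) < 1"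
        using rank_frac[OF m N, of k "v \<omega>"] k unfolding I_def by auto
      then show "(case k of (i, j) \<Rightarrow> cdf_inv Pbar (real (rank I (\<lambda>(i', j'). \<bar>T \<omega> i' j'\<bar>) (i, j)) / (real m * real N + 1)) *
           (if sgn1 (T \<omega> i j) * Z \<omega> i j < 0 then 1 else 0)) =
          Q' ((1 + (\<Sum>k'\<in>I. if lexlt (v \<omega>) k' k then 1 else 0)) / (real m * real N + 1)) *
          (if sgn1 (T \<omega> (fst k) (snd k)) * Z \<omega> (fst k) (snd k) < 0 then 1 else 0)"
        unfolding r[symmetric] by (cases k) (simp add: Q'_def v_def)
    qed
  qed
  have inner: "(\<lambda>\<omega>. Q' ((1 + (\<Sum>k'\<in>I. if lexlt (v \<omega>) k' k then 1 else 0)) / (real m * real N + 1))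
         * (if sgn1 (T \<omega> (fst k) (snd k)) * Z \<omega> (fst k) (snd k) < 0 then 1 else 0)) \<in> borel_measurable M"
    if k: "k \<in> I" for k
  proof -
    have Tk: "(\<lambda>\<omega>. T \<omega> (fst k) (snd k)) \<in> borel_measurable M"
      and Zk: "(\<lambda>\<omega>. Z \<omega> (fst k) (snd k)) \<in> borel_measurable M"
      using k Tm Zm unfolding I_def by (auto simp: mem_Times_iff)
    have lm: "(\<lambda>\<omega>. if lexlt (v \<omega>) k' k then 1 else (0::real)) \<in> borel_measurable M" if "k' \<in> I" for k'
    proof -
      note [measurable] = vm[OF k] vm[OF that]
      show ?thesis unfolding lexlt_def by measurable
    qed
    have sm[measurable]: "(\<lambda>\<omega>. (\<Sum>k'\<in>I. if lexlt (v \<omega>) k' k then 1 else (0::real))) \<in> borel_measurable M"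
      by (rule borel_measurable_sum) (rule lm)
    have a: "(\<lambda>\<omega>. Q' ((1 + (\<Sum>k'\<in>I. if lexlt (v \<omega>) k' k then 1 else 0)) / (real m * real N + 1))) \<in> borel_measurable M"
      by (rule measurable_compose[OF _ Q'm]) (use sm in simp)
    have b: "(\<lambda>\<omega>. sgn1 (T \<omega> (fst k) (snd k)) * Z \<omega> (fst k) (snd k)) \<in> borel_measurable M"
      by (rule borel_measurable_times[OF measurable_compose[OF Tk sgnm] Zk])
    have c: "(\<lambda>\<omega>. if sgn1 (T \<omega> (fst k) (snd k)) * Z \<omega> (fst k) (snd k) < 0 then 1 else (0::real)) \<in> borel_measurable M"
    proof -
      note [measurable] = b
      show ?thesis by measurable
    qed
    show ?thesis by (rule borel_measurable_times[OF a c])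
  qed
  show ?thesis
    unfolding term_eq
    by (intro borel_measurable_times borel_measurable_const borel_measurable_sum inner)
qed

lemma cdf_core_props:
  fixes F :: "real \<Rightarrow> real"
  assumes mono: "mono F" and neg: "\<And>t. t < 0 \<Longrightarrow> F t = 0"
    and bij: "bij_betw F (cdf_core F) {0<..<1}"
  shows "F 0 = 0"
    and "\<And>u. 0 < u \<Longrightarrow> u < 1 \<Longrightarrow> cdf_inv F u \<in> cdf_core F \<and> F (cdf_inv F u) = u"
    and "\<And>u t. 0 < u \<Longrightarrow> u < 1 \<Longrightarrow> cdf_inv F u \<le> t \<longleftrightarrow> u \<le> F t"
proof -
  have inj: "inj_on F (cdf_core F)" and img: "F ` cdf_core F = {0<..<1}"
    using bij by (auto simp: bij_betw_def)
  have F0: "F 0 \<ge> 0" using neg[of "-1"] mono by (auto dest: monoD[of F "-1" 0])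
  show Q: "cdf_inv F u \<in> cdf_core F \<and> F (cdf_inv F u) = u" if "0 < u" "u < 1" for u
  proof -
    have "u \<in> F ` cdf_core F" using img that by auto
    then show ?thesis unfolding cdf_inv_def
      using the_inv_into_into[OF inj, of u] f_the_inv_into_f[OF inj, of u] by auto
  qed
  show F00: "F 0 = 0"
  proof (rule ccontr)
    assume "F 0 \<noteq> 0"
    then have pos: "F 0 > 0" using F0 by simp
    define u where "u = min (F 0 / 2) (1/2)"
    have u: "0 < u" "u < 1" "u < F 0" using pos unfolding u_def by auto
    from Q[OF u(1,2)] have "cdf_inv F u > 0" "F (cdf_inv F u) = u" by (auto simp: cdf_core_def)
    then have "F 0 \<le> u" using mono by (metis less_imp_le monoD)
    then show False using u by simp
  qed
  show "cdf_inv F u \<le> t \<longleftrightarrow> u \<le> F t" if u: "0 < u" "u < 1" for u t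
  proof
    assume "cdf_inv F u \<le> t"
    then have "F (cdf_inv F u) \<le> F t" by (rule monoD[OF mono])
    then show "u \<le> F t" using Q[OF u] by simp
  next
    assume ut: "u \<le> F t"
    show "cdf_inv F u \<le> t"
    proof (rule ccontr)
      assume "\<not> cdf_inv F u \<le> t"
      then have lt: "t < cdf_inv F u" by simp
      then have "F t \<le> F (cdf_inv F u)" using mono by (simp add: monoD)
      then have Ft: "F t = u" using ut Q[OF u] by simp
      have "t > 0"
      proof (rule ccontr)
        assume "\<not> t > 0"
        then have "F t \<le> F 0" using mono by (simp add: monoD)
        then show False using Ft u F00 by simp
      qed
      then have "t \<in> cdf_core F" using Ft u by (simp add: cdf_core_def)
      moreover have "F t = F (cdf_inv F u)" using Ft Q[OF u] by simp
      ultimately have "t = cdf_inv F u" using inj Q[OF u] by (auto dest: inj_onD)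
      then show False using lt by simp
    qed
  qed
qed

lemma quantile_integral:
  fixes \<mu> :: "real measure" and F :: "real \<Rightarrow> real" and g :: "real \<Rightarrow> real"
  assumes rd: "real_distribution \<mu>"
    and Fdef: "\<And>t. measure \<mu> {..t} = F t"
    and neg: "\<And>t. t < 0 \<Longrightarrow> F t = 0"
    and bij: "bij_betw F (cdf_core F) {0<..<1}"
    and Qc: "continuous_on {0<..<1} (cdf_inv F)"
    and g[measurable]: "g \<in> borel_measurable borel"
  shows "(\<integral>x. g x \<partial>\<mu>) = (\<integral>u. indicator {0<..<1} u * g (cdf_inv F u) \<partial>lborel)"
proof -
  interpret rd: real_distribution \<mu> by (fact rd)
  have mono: "mono F" unfolding mono_def Fdef[symmetric]
    by (intro allI impI rd.finite_measure_mono) auto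
  note props = cdf_core_props[OF mono neg bij]
  define Q' where "Q' u = indicator {0<..<1::real} u *\<^sub>R cdf_inv F u" for u
  have Q'm[measurable]: "Q' \<in> borel_measurable borel"
    unfolding Q'_def by (rule borel_measurable_continuous_on_indicator[OF _ Qc]) simp
  define U where "U = density lborel (\<lambda>x. ennreal (indicator {0<..<1::real} x))"
  have sU[simp]: "sets U = sets borel" "space U = UNIV" unfolding U_def by auto
  have emU: "emeasure U A = emeasure lborel ({0<..<1} \<inter> A)" if "A \<in> sets borel" for A
  proof -
    have "emeasure U A = (\<integral>\<^sup>+x. ennreal (indicator {0<..<1::real} x) * indicator A x \<partial>lborel)"
      unfolding U_def using that by (simp add: emeasure_density)
    also have "\<dots> = (\<integral>\<^sup>+x. indicator ({0<..<1} \<inter> A) x \<partial>lborel)"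
      by (intro nn_integral_cong) (auto simp: indicator_def)
    also have "\<dots> = emeasure lborel ({0<..<1} \<inter> A)"
      using that by (intro nn_integral_indicator) auto
    finally show ?thesis .
  qed
  have "prob_space U"
    by (rule prob_spaceI) (simp add: emU)
  define \<nu> where "\<nu> = distr U borel Q'"
  have Qm: "Q' \<in> measurable U borel" by (subst measurable_cong_sets[OF sU(1) refl]) (rule Q'm)
  have rdn: "real_distribution \<nu>"
    unfolding \<nu>_def real_distribution_def real_distribution_axioms_def
    using prob_space.prob_space_distr[OF \<open>prob_space U\<close> Qm] by simp
  have "cdf \<nu> = cdf \<mu>"
  proof
    fix t
    have "cdf \<nu> t = measure U (Q' -` {..t})"
      unfolding cdf_def \<nu>_def using measure_distr[OF Qm, of "{..t}"] by simp
    also have "\<dots> = measure lborel ({0<..<1} \<inter> Q' -` {..t})"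
    proof -
      have "Q' -` {..t} \<in> sets borel" using measurable_sets[OF Q'm, of "{..t}"] by simp
      then show ?thesis using emU[of "Q' -` {..t}"] unfolding measure_def by simp
    qed
    also have "{0<..<1} \<inter> Q' -` {..t} = {0<..<1} \<inter> {..F t}"
    proof (intro set_eqI iffI)
      fix x assume "x \<in> {0<..<1} \<inter> Q' -` {..t}"
      then have x: "0 < x" "x < 1" "cdf_inv F x \<le> t" by (auto simp: Q'_def)
      then show "x \<in> {0<..<1} \<inter> {..F t}" using props(3)[of x t] by simp
    next
      fix x assume "x \<in> {0<..<1} \<inter> {..F t}"
      then have x: "0 < x" "x < 1" "x \<le> F t" by auto
      then show "x \<in> {0<..<1} \<inter> Q' -` {..t}" using props(3)[of x t] by (simp add: Q'_def)
    qed
    also have "measure lborel ({0<..<1} \<inter> {..F t}) = F t"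
    proof -
      have F01: "0 \<le> F t" "F t \<le> 1" unfolding Fdef[symmetric] by auto
      show ?thesis
      proof (cases "F t < 1")
        case True
        then have "{0<..<1} \<inter> {..F t} = {0<..F t}" by auto
        then show ?thesis using F01 by simp
      next
        case False
        then have "{0<..<1} \<inter> {..F t} = {0<..<1}" using F01 by auto
        then show ?thesis using F01 False by simp
      qed
    qed
    finally show "cdf \<nu> t = cdf \<mu> t" unfolding cdf_def Fdef by simp
  qed
  then have "\<nu> = \<mu>" using cdf_unique[OF rdn rd] by simp
  then have "(\<integral>x. g x \<partial>\<mu>) = (\<integral>u. g (Q' u) \<partial>U)"
    unfolding \<nu>_def using integral_distr[OF Qm g] by metis
  also have "\<dots> = (\<integral>u. indicator {0<..<1} u * g (Q' u) \<partial>lborel)"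
    unfolding U_def by (subst integral_density) auto
  also have "\<dots> = (\<integral>u. indicator {0<..<1} u * g (cdf_inv F u) \<partial>lborel)"
    by (intro Bochner_Integration.integral_cong) (auto simp: Q'_def indicator_def)
  finally show ?thesis .
qed

lemma mixture:
  fixes m :: nat and f :: "nat \<Rightarrow> 'y::euclidean_space \<Rightarrow> real" and H :: "nat \<Rightarrow> 'y \<Rightarrow> real"
  assumes m: "m \<ge> 1"
    and fm: "\<And>j. j \<in> {1..m} \<Longrightarrow> f j \<in> borel_measurable lborel"
    and fnn: "\<And>j y. j \<in> {1..m} \<Longrightarrow> 0 \<le> f j y"
    and fint: "\<And>j. j \<in> {1..m} \<Longrightarrow> integrable lborel (f j)"
    and f1: "\<And>j. j \<in> {1..m} \<Longrightarrow> (\<integral>y. f j y \<partial>lborel) = 1"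
    and Hm: "\<And>j. j \<in> {1..m} \<Longrightarrow> H j \<in> borel_measurable lborel"
  defines "D \<equiv> density (count_space {1..m} \<Otimes>\<^sub>M lborel) (\<lambda>(j,y). ennreal (f j y / real m))"
  defines "\<mu> \<equiv> distr D borel (\<lambda>(j,y). H j y)"
  shows "real_distribution \<mu>"
    and "\<And>G C. G \<in> borel_measurable borel \<Longrightarrow> (\<And>x. 0 \<le> G x) \<Longrightarrow> (\<And>x. G x \<le> C) \<Longrightarrow>
          (\<integral>x. G x \<partial>\<mu>) = (1 / real m) * (\<Sum>j=1..m. \<integral>y. f j y * G (H j y) \<partial>lborel)"
proof -
  have cnt: "countable {1..m}" by simp
  have Dm: "(\<lambda>(j,y). ennreal (f j y / real m)) \<in> borel_measurable (count_space {1..m} \<Otimes>\<^sub>M lborel)"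
    by (rule measurable_pair_measure_countable1[OF cnt]) (use fm in simp)
  have H'm: "(\<lambda>(j,y). H j y) \<in> measurable D borel"
  proof -
    have "(\<lambda>(j,y). H j y) \<in> borel_measurable (count_space {1..m} \<Otimes>\<^sub>M lborel)"
      by (rule measurable_pair_measure_countable1[OF cnt]) (use Hm in simp)
    then show ?thesis unfolding D_def by (simp only: measurable_density_eq1)
  qed
  have nnI: "integral\<^sup>N D G' = (\<Sum>j=1..m. \<integral>\<^sup>+ y. ennreal (f j y / real m) * G' (j, y) \<partial>lborel)"
    if G'm: "G' \<in> borel_measurable (count_space {1..m} \<Otimes>\<^sub>M lborel)" for G'
  proof -
    have "integral\<^sup>N D G' = (\<integral>\<^sup>+ x. (case x of (j,y) \<Rightarrow> ennreal (f j y / real m)) * G' x \<partial>(count_space {1..m} \<Otimes>\<^sub>M lborel))"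
      unfolding D_def by (rule nn_integral_density[OF Dm G'm])
    also have "\<dots> = (\<integral>\<^sup>+ j. \<integral>\<^sup>+ y. ennreal (f j y / real m) * G' (j, y) \<partial>lborel \<partial>count_space {1..m})"
      by (subst lborel.nn_integral_fst[symmetric]) (use Dm G'm in auto)
    also have "\<dots> = (\<Sum>j=1..m. \<integral>\<^sup>+ y. ennreal (f j y / real m) * G' (j, y) \<partial>lborel)"
      by (rule nn_integral_count_space_finite) simp
    finally show ?thesis .
  qed
  have totD: "emeasure D (space D) = 1"
  proof -
    have "emeasure D (space D) = integral\<^sup>N D (\<lambda>_. 1)"
      by simp
    also have "\<dots> = (\<Sum>j=1..m. \<integral>\<^sup>+ y. ennreal (f j y / real m) \<partial>lborel)"
      by (subst nnI) auto
    also have "\<dots> = (\<Sum>j=1..m. ennreal (1 / real m))"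
    proof (intro sum.cong refl)
      fix j assume j: "j \<in> {1..m}"
      have "(\<integral>\<^sup>+ y. ennreal (f j y / real m) \<partial>lborel) = ennreal (\<integral>y. f j y / real m \<partial>lborel)"
        using j fint fnn by (intro nn_integral_eq_integral) auto
      also have "\<dots> = ennreal (1 / real m)" using f1[OF j] by simp
      finally show "(\<integral>\<^sup>+ y. ennreal (f j y / real m) \<partial>lborel) = ennreal (1 / real m)" .
    qed
    also have "\<dots> = 1" using m by (simp add: ennreal_of_nat_eq_real_of_nat ennreal_mult'[symmetric])
    finally show ?thesis .
  qed
  have pD: "prob_space D" by (rule prob_spaceI) (rule totD)
  show "real_distribution \<mu>"
    unfolding \<mu>_def real_distribution_def real_distribution_axioms_def
    using prob_space.prob_space_distr[OF pD H'm] by simp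
  show "(\<integral>x. G x \<partial>\<mu>) = (1 / real m) * (\<Sum>j=1..m. \<integral>y. f j y * G (H j y) \<partial>lborel)"
    if Gm: "G \<in> borel_measurable borel" and G0: "\<And>x. 0 \<le> G x" and GC: "\<And>x. G x \<le> C" for G C
  proof -
    have C0: "0 \<le> C" using G0[of 0] GC[of 0] by simp
    have intj: "integrable lborel (\<lambda>y. f j y / real m * G (H j y))" if j: "j \<in> {1..m}" for j
    proof (rule Bochner_Integration.integrable_bound)
      show "integrable lborel (\<lambda>y. f j y / real m * C)" using fint[OF j] by simp
      show "(\<lambda>y. f j y / real m * G (H j y)) \<in> borel_measurable lborel"
        using fm[OF j] Hm[OF j] Gm by measurable
      show "AE y in lborel. norm (f j y / real m * G (H j y)) \<le> norm (f j y / real m * C)"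
      proof (rule AE_I2)
        fix y
        have "f j y * G (H j y) \<le> f j y * C" using fnn[OF j] GC by (intro mult_left_mono) auto
        then show "norm (f j y / real m * G (H j y)) \<le> norm (f j y / real m * C)"
          using fnn[OF j, of y] G0[of "H j y"] C0 by (simp add: abs_mult divide_right_mono)
      qed
    qed
    have "(\<integral>x. G x \<partial>\<mu>) = (\<integral>x. G ((\<lambda>(j,y). H j y) x) \<partial>D)"
      unfolding \<mu>_def by (rule integral_distr[OF H'm Gm])
    also have "\<dots> = enn2real (\<integral>\<^sup>+ x. ennreal (G ((\<lambda>(j,y). H j y) x)) \<partial>D)"
      by (rule integral_eq_nn_integral) (use H'm Gm G0 in auto)
    also have "(\<integral>\<^sup>+ x. ennreal (G ((\<lambda>(j,y). H j y) x)) \<partial>D)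
        = (\<Sum>j=1..m. \<integral>\<^sup>+ y. ennreal (f j y / real m) * ennreal (G (H j y)) \<partial>lborel)"
    proof (subst nnI)
      show "(\<lambda>x. ennreal (G ((\<lambda>(j,y). H j y) x))) \<in> borel_measurable (count_space {1..m} \<Otimes>\<^sub>M lborel)"
        by (rule measurable_pair_measure_countable1[OF cnt]) (use Hm Gm in simp)
    qed simp
    also have "\<dots> = (\<Sum>j=1..m. ennreal (\<integral>y. f j y / real m * G (H j y) \<partial>lborel))"
    proof (intro sum.cong refl)
      fix j assume j: "j \<in> {1..m}"
      have "(\<integral>\<^sup>+ y. ennreal (f j y / real m) * ennreal (G (H j y)) \<partial>lborel)
          = (\<integral>\<^sup>+ y. ennreal (f j y / real m * G (H j y)) \<partial>lborel)"
      proof (intro nn_integral_cong)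
        fix y
        have "0 \<le> f j y / real m" using fnn[OF j, of y] by simp
        then show "ennreal (f j y / real m) * ennreal (G (H j y)) = ennreal (f j y / real m * G (H j y))"
          using G0[of "H j y"] by (simp only: ennreal_mult)
      qed
      also have "\<dots> = ennreal (\<integral>y. f j y / real m * G (H j y) \<partial>lborel)"
        using intj[OF j] fnn[OF j] G0 by (intro nn_integral_eq_integral) auto
      finally show "(\<integral>\<^sup>+ y. ennreal (f j y / real m) * ennreal (G (H j y)) \<partial>lborel) = ennreal (\<integral>y. f j y / real m * G (H j y) \<partial>lborel)" .
    qed
    also have "\<dots> = ennreal (\<Sum>j=1..m. \<integral>y. f j y / real m * G (H j y) \<partial>lborel)"
      using fnn G0 by (intro sum_ennreal) (auto intro!: integral_nonneg_AE)
    finally have "(\<integral>x. G x \<partial>\<mu>) = enn2real (ennreal (\<Sum>j=1..m. \<integral>y. f j y / real m * G (H j y) \<partial>lborel))" .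
    moreover have "(\<Sum>j=1..m. \<integral>y. f j y / real m * G (H j y) \<partial>lborel) \<ge> 0"
      using fnn G0 by (intro sum_nonneg integral_nonneg_AE) auto
    ultimately have "(\<integral>x. G x \<partial>\<mu>) = (\<Sum>j=1..m. \<integral>y. f j y / real m * G (H j y) \<partial>lborel)"
      by simp
    also have "\<dots> = (\<Sum>j=1..m. (1 / real m) * (\<integral>y. f j y * G (H j y) \<partial>lborel))"
      by (intro sum.cong refl) (simp flip: integral_mult_right_zero add: field_simps)
    also have "\<dots> = (1 / real m) * (\<Sum>j=1..m. \<integral>y. f j y * G (H j y) \<partial>lborel)"
      by (simp add: sum_distrib_left)
    finally show ?thesis .
  qed
qed

locale bicm =
  fixes m :: nat and S :: "'s set" and mu :: "(nat \<Rightarrow> real) \<Rightarrow> 's"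
    and p :: "'s \<Rightarrow> 'y::euclidean_space \<Rightarrow> real"
    and P :: "'w measure"
    and X :: "nat \<Rightarrow> 'w \<Rightarrow> (nat \<Rightarrow> real)"
    and Wc :: "nat \<Rightarrow> 'w \<Rightarrow> (nat \<Rightarrow> real)"
    and Y :: "nat \<Rightarrow> 'w \<Rightarrow> 'y"
    and \<theta> :: real
  assumes m: "m \<ge> 1"
    and mu: "bij_betw mu (label_set m) S"
    and dens: "\<forall>s\<in>S. (\<forall>y. 0 \<le> p s y) \<and> integrable lborel (p s) \<and> (\<integral>y. p s y \<partial>lborel) = 1"
    and A3bar: "A3 (Psibar m mu S p)"
    and P: "prob_space P"
    and measX: "\<forall>i. X i \<in> measurable P (count_space UNIV)"
    and measW: "\<forall>i. Wc i \<in> measurable P (count_space UNIV)"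
    and measY: "\<forall>i. Y i \<in> borel_measurable P"
    and indep: "prob_space.indep_vars P
                  (\<lambda>_. count_space UNIV \<Otimes>\<^sub>M count_space UNIV \<Otimes>\<^sub>M borel)
                  (\<lambda>i \<omega>. (X i \<omega>, Wc i \<omega>, Y i \<omega>)) UNIV"
    and law: "\<forall>i b c A. b \<in> label_set m \<longrightarrow> c \<in> label_set m \<longrightarrow> A \<in> sets borel \<longrightarrow>
                measure P {\<omega>\<in>space P. X i \<omega> = b \<and> Wc i \<omega> = c \<and> Y i \<omega> \<in> A}
                  = (1 / 2 ^ m) * (1 / 2 ^ m) * (\<integral>y. indicator A y * p (mu b) y \<partial>lborel)"
    and \<theta>: "\<theta> < 0"

sublocale bicm \<subseteq> Pr: prob_space P by (rule P)

context bicm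
begin

abbreviation "L \<equiv> label_set m"

lemma finL: "finite L" unfolding label_set_def by (simp add: finite_PiE)

lemma cardL: "card L = 2 ^ m"
proof -
  have "card {-1, 1::real} = 2" by simp
  then show ?thesis unfolding label_set_def by (simp add: card_PiE numeral_2_eq_2)
qed

lemma finS: "finite S" using mu finL bij_betw_finite by blast

lemma cardS: "card S = 2 ^ m" using mu cardL bij_betw_same_card by metis

definition "\<rho> b B = (\<integral>y. indicator B y * p (mu b) y \<partial>lborel)"
definition "R B = (\<Sum>b\<in>L. \<rho> b B)"

lemma R_UNIV: "R UNIV = 2 ^ m"
proof -
  have "\<rho> b UNIV = 1" if "b \<in> L" for b
  proof -
    have "mu b \<in> S" using mu that by (auto simp: bij_betw_def)
    then show ?thesis using dens unfolding \<rho>_def by simp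
  qed
  then show ?thesis unfolding R_def using cardL by simp
qed

lemma ev_sets: "B \<in> sets borel \<Longrightarrow> {\<omega>\<in>space P. Wc i \<omega> \<in> C \<and> Y i \<omega> \<in> B} \<in> sets P"
proof -
  assume B: "B \<in> sets borel"
  have "{\<omega>\<in>space P. Wc i \<omega> \<in> C \<and> Y i \<omega> \<in> B} = (Wc i -` C \<inter> space P) \<inter> (Y i -` B \<inter> space P)" by auto
  moreover have "Wc i -` C \<inter> space P \<in> sets P" using measW by (intro measurable_sets) auto
  moreover have "Y i -` B \<inter> space P \<in> sets P" using measY B by (intro measurable_sets) auto
  ultimately show ?thesis by auto
qed

lemma ev3_sets: "B \<in> sets borel \<Longrightarrow> {\<omega>\<in>space P. X i \<omega> = b \<and> Wc i \<omega> = c \<and> Y i \<omega> \<in> B} \<in> sets P"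
proof -
  assume B: "B \<in> sets borel"
  have "{\<omega>\<in>space P. X i \<omega> = b \<and> Wc i \<omega> = c \<and> Y i \<omega> \<in> B} = (X i -` {b} \<inter> space P) \<inter> {\<omega>\<in>space P. Wc i \<omega> \<in> {c} \<and> Y i \<omega> \<in> B}" by auto
  moreover have "X i -` {b} \<inter> space P \<in> sets P" using measX by (intro measurable_sets) auto
  moreover have "{\<omega>\<in>space P. Wc i \<omega> \<in> {c} \<and> Y i \<omega> \<in> B} = {\<omega>\<in>space P. Wc i \<omega> = c \<and> Y i \<omega> \<in> B}" by auto
  ultimately show ?thesis using ev_sets[OF B, of i "{c}"] by auto
qed

lemma good_part:
  assumes B: "B \<in> sets borel"
  shows "Pr.prob ({\<omega>\<in>space P. Wc i \<omega> \<in> C \<and> Y i \<omega> \<in> B} \<inter> {\<omega>\<in>space P. X i \<omega> \<in> L \<and> Wc i \<omega> \<in> L})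
         = real (card (C \<inter> L)) / 2 ^ m / 2 ^ m * R B"
proof -
  define e where "e = (\<lambda>(b,c). {\<omega>\<in>space P. X i \<omega> = b \<and> Wc i \<omega> = c \<and> Y i \<omega> \<in> B})"
  have eq: "{\<omega>\<in>space P. Wc i \<omega> \<in> C \<and> Y i \<omega> \<in> B} \<inter> {\<omega>\<in>space P. X i \<omega> \<in> L \<and> Wc i \<omega> \<in> L}
      = (\<Union>bc\<in>L \<times> (C \<inter> L). e bc)"
    unfolding e_def by auto
  have "Pr.prob (\<Union>bc\<in>L \<times> (C \<inter> L). e bc) = (\<Sum>bc\<in>L \<times> (C \<inter> L). Pr.prob (e bc))"
  proof (rule Pr.finite_measure_finite_Union)
    show "finite (L \<times> (C \<inter> L))" using finL by simp
    show "e ` (L \<times> (C \<inter> L)) \<subseteq> Pr.events" using ev3_sets[OF B] unfolding e_def by auto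
    show "disjoint_family_on e (L \<times> (C \<inter> L))"
      unfolding disjoint_family_on_def e_def by auto
  qed
  also have "\<dots> = (\<Sum>(b,c)\<in>L \<times> (C \<inter> L). (1 / 2 ^ m) * (1 / 2 ^ m) * \<rho> b B)"
  proof (intro sum.cong refl)
    fix bc assume bc: "bc \<in> L \<times> (C \<inter> L)"
    obtain b c where bcd: "bc = (b, c)" by force
    show "Pr.prob (e bc) = (case bc of (b, c) \<Rightarrow> 1 / 2 ^ m * (1 / 2 ^ m) * \<rho> b B)"
      using law B bc unfolding e_def \<rho>_def bcd by auto
  qed
  also have "\<dots> = (\<Sum>b\<in>L. \<Sum>c\<in>C \<inter> L. (1 / 2 ^ m) * (1 / 2 ^ m) * \<rho> b B)"
    by (rule sum.cartesian_product[symmetric])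
  also have "\<dots> = real (card (C \<inter> L)) / 2 ^ m / 2 ^ m * R B"
    unfolding R_def by (simp add: sum_distrib_left)
  finally show ?thesis using eq by simp
qed

lemma good_prob: "Pr.prob {\<omega>\<in>space P. X i \<omega> \<in> L \<and> Wc i \<omega> \<in> L} = 1"
proof -
  have "{\<omega>\<in>space P. Wc i \<omega> \<in> UNIV \<and> Y i \<omega> \<in> UNIV} \<inter> {\<omega>\<in>space P. X i \<omega> \<in> L \<and> Wc i \<omega> \<in> L}
      = {\<omega>\<in>space P. X i \<omega> \<in> L \<and> Wc i \<omega> \<in> L}" by auto
  then show ?thesis using good_part[of UNIV i UNIV] cardL R_UNIV by simp
qed

lemma good_AE: "AE \<omega> in P. X i \<omega> \<in> L \<and> Wc i \<omega> \<in> L"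
proof -
  have "AE \<omega> in P. \<omega> \<in> {\<omega>\<in>space P. X i \<omega> \<in> L \<and> Wc i \<omega> \<in> L}"
    by (rule Pr.AE_prob_1[OF good_prob])
  then show ?thesis by (auto elim: AE_mp)
qed

lemma marg_gen:
  assumes B: "B \<in> sets borel"
  shows "Pr.prob {\<omega>\<in>space P. Wc i \<omega> \<in> C \<and> Y i \<omega> \<in> B} = real (card (C \<inter> L)) / 2 ^ m / 2 ^ m * R B"
proof -
  have "Pr.prob {\<omega>\<in>space P. Wc i \<omega> \<in> C \<and> Y i \<omega> \<in> B}
      = Pr.prob ({\<omega>\<in>space P. Wc i \<omega> \<in> C \<and> Y i \<omega> \<in> B} \<inter> {\<omega>\<in>space P. X i \<omega> \<in> L \<and> Wc i \<omega> \<in> L})"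
  proof (rule measure_eq_AE)
    show "AE x in P. (x \<in> {\<omega> \<in> space P. Wc i \<omega> \<in> C \<and> Y i \<omega> \<in> B}) =
        (x \<in> {\<omega> \<in> space P. Wc i \<omega> \<in> C \<and> Y i \<omega> \<in> B} \<inter> {\<omega> \<in> space P. X i \<omega> \<in> L \<and> Wc i \<omega> \<in> L})"
      using good_AE[of i] by (auto elim: AE_mp)
    show "{\<omega> \<in> space P. Wc i \<omega> \<in> C \<and> Y i \<omega> \<in> B} \<in> sets P" by (rule ev_sets[OF B])
    have "{\<omega> \<in> space P. X i \<omega> \<in> L \<and> Wc i \<omega> \<in> L} \<in> sets P"
    proof -
      have "{\<omega> \<in> space P. X i \<omega> \<in> L \<and> Wc i \<omega> \<in> L} = (X i -` L \<inter> space P) \<inter> {\<omega>\<in>space P. Wc i \<omega> \<in> L \<and> Y i \<omega> \<in> UNIV}"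
        by auto
      moreover have "X i -` L \<inter> space P \<in> sets P" using measX by (intro measurable_sets) auto
      ultimately show ?thesis using ev_sets[of UNIV i L] by auto
    qed
    then show "{\<omega> \<in> space P. Wc i \<omega> \<in> C \<and> Y i \<omega> \<in> B} \<inter> {\<omega> \<in> space P. X i \<omega> \<in> L \<and> Wc i \<omega> \<in> L} \<in> sets P"
      using ev_sets[OF B] by auto
  qed
  then show ?thesis using good_part[OF B] by simp
qed

lemma marg_W: "Pr.prob {\<omega>\<in>space P. Wc i \<omega> \<in> C \<and> Y i \<omega> \<in> UNIV} = real (card (C \<inter> L)) / 2 ^ m"
  using marg_gen[of UNIV i C] R_UNIV by simp

lemma marg_Y: "B \<in> sets borel \<Longrightarrow> Pr.prob {\<omega>\<in>space P. Wc i \<omega> \<in> UNIV \<and> Y i \<omega> \<in> B} = R B / 2 ^ m"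
  using marg_gen[of B i UNIV] cardL by simp

lemma marg_indep:
  "B \<in> sets borel \<Longrightarrow> Pr.prob {\<omega>\<in>space P. Wc i \<omega> \<in> C \<and> Y i \<omega> \<in> B}
     = Pr.prob {\<omega>\<in>space P. Wc i \<omega> \<in> C \<and> Y i \<omega> \<in> UNIV} * Pr.prob {\<omega>\<in>space P. Wc i \<omega> \<in> UNIV \<and> Y i \<omega> \<in> B}"
  using marg_gen[of B i C] marg_W[of i C] marg_Y[of B i] by simp

end

context bicm
begin

definition "cyl N C B = {\<omega>\<in>space P. \<forall>i\<in>{1..N}. Wc i \<omega> \<in> C i \<and> Y i \<omega> \<in> B i}"

lemma cyl_sets: "(\<And>i. i \<in> {1..N} \<Longrightarrow> B i \<in> sets borel) \<Longrightarrow> cyl N C B \<in> sets P"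
  unfolding cyl_def by (intro sets.sets_Collect_finite_All ev_sets) auto

lemma cyl_prob:
  assumes N: "N \<ge> 1" and B: "\<And>i. i \<in> {1..N} \<Longrightarrow> B i \<in> sets borel"
  shows "Pr.prob (cyl N C B) = (\<Prod>i\<in>{1..N}. Pr.prob {\<omega>\<in>space P. Wc i \<omega> \<in> C i \<and> Y i \<omega> \<in> B i})"
proof -
  define Mz where "Mz = (count_space UNIV \<Otimes>\<^sub>M count_space UNIV \<Otimes>\<^sub>M borel :: ((nat \<Rightarrow> real) \<times> (nat \<Rightarrow> real) \<times> 'y) measure)"
  define Z where "Z = (\<lambda>i \<omega>. (X i \<omega>, Wc i \<omega>, Y i \<omega>))"
  have ind: "Pr.indep_sets (\<lambda>i. {Z i -` A \<inter> space P |A. A \<in> sets Mz}) UNIV"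
    using indep unfolding Pr.indep_vars_def2 Z_def Mz_def by simp
  define A where "A i = Z i -` (UNIV \<times> C i \<times> B i) \<inter> space P" for i
  have Ain: "A i \<in> {Z i -` A \<inter> space P |A. A \<in> sets Mz}" if "i \<in> {1..N}" for i
  proof -
    have "UNIV \<times> C i \<times> B i \<in> sets Mz" unfolding Mz_def
      using B[OF that] by (intro pair_measureI) auto
    then show ?thesis unfolding A_def by blast
  qed
  have "Pr.prob (\<Inter>i\<in>{1..N}. A i) = (\<Prod>i\<in>{1..N}. Pr.prob (A i))"
    using N Ain by (intro Pr.indep_setsD[OF ind]) auto
  moreover have "(\<Inter>i\<in>{1..N}. A i) = cyl N C B"
    using N unfolding A_def cyl_def Z_def by auto
  moreover have "A i = {\<omega>\<in>space P. Wc i \<omega> \<in> C i \<and> Y i \<omega> \<in> B i}" for i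
    unfolding A_def Z_def by auto
  ultimately show ?thesis by simp
qed

definition "Ycyl N = {cyl N (\<lambda>_. UNIV) B | B. \<forall>i\<in>{1..N}. B i \<in> sets borel}"
definition "Wcyl N = {cyl N C (\<lambda>_. UNIV) | C. True}"
definition "Ysig N = sigma_sets (space P) (Ycyl N)"
definition "Wsig N = sigma_sets (space P) (Wcyl N)"

lemma cyl_Int: "cyl N C1 B1 \<inter> cyl N C2 B2 = cyl N (\<lambda>i. C1 i \<inter> C2 i) (\<lambda>i. B1 i \<inter> B2 i)"
  unfolding cyl_def by auto

lemma indep_YW:
  assumes N: "N \<ge> 1"
  shows "Pr.indep_set (Ysig N) (Wsig N)"
  unfolding Ysig_def Wsig_def
proof (rule Pr.indep_set_sigma_sets)
  show "Pr.indep_set (Ycyl N) (Wcyl N)"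
  proof (rule Pr.indep_setI)
    show "Ycyl N \<subseteq> Pr.events" unfolding Ycyl_def using cyl_sets by auto
    show "Wcyl N \<subseteq> Pr.events" unfolding Wcyl_def using cyl_sets by auto
    fix a b assume a: "a \<in> Ycyl N" and b: "b \<in> Wcyl N"
    from a obtain B where B: "\<forall>i\<in>{1..N}. B i \<in> sets borel" "a = cyl N (\<lambda>_. UNIV) B"
      unfolding Ycyl_def by auto
    from b obtain C where C: "b = cyl N C (\<lambda>_. UNIV)"
      unfolding Wcyl_def by auto
    have "a \<inter> b = cyl N C B" using B C cyl_Int[of N "\<lambda>_. UNIV" B C "\<lambda>_. UNIV"] by simp
    then have "Pr.prob (a \<inter> b) = (\<Prod>i\<in>{1..N}. Pr.prob {\<omega>\<in>space P. Wc i \<omega> \<in> C i \<and> Y i \<omega> \<in> B i})"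
      using cyl_prob[OF N, of B C] B by simp
    also have "\<dots> = (\<Prod>i\<in>{1..N}. Pr.prob {\<omega>\<in>space P. Wc i \<omega> \<in> UNIV \<and> Y i \<omega> \<in> B i}
                      * Pr.prob {\<omega>\<in>space P. Wc i \<omega> \<in> C i \<and> Y i \<omega> \<in> UNIV})"
      using B marg_indep by (intro prod.cong refl) (simp add: mult.commute)
    also have "\<dots> = Pr.prob a * Pr.prob b"
      using cyl_prob[OF N, of B "\<lambda>_. UNIV"] cyl_prob[OF N, of "\<lambda>_. UNIV" C] B C
      by (simp add: prod.distrib)
    finally show "Pr.prob (a \<inter> b) = Pr.prob a * Pr.prob b" .
  qed
  show "Int_stable (Ycyl N)"
    unfolding Int_stable_def Ycyl_def
  proof (safe)
    fix B1 B2 :: "nat \<Rightarrow> 'y set" assume "\<forall>i\<in>{1..N}. B1 i \<in> sets borel" "\<forall>i\<in>{1..N}. B2 i \<in> sets borel"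
    then show "\<exists>B. cyl N (\<lambda>_. UNIV) B1 \<inter> cyl N (\<lambda>_. UNIV) B2 = cyl N (\<lambda>_. UNIV) B \<and> (\<forall>i\<in>{1..N}. B i \<in> sets borel)"
      by (intro exI[of _ "\<lambda>i. B1 i \<inter> B2 i"]) (auto simp: cyl_Int)
  qed
  show "Int_stable (Wcyl N)"
    unfolding Int_stable_def Wcyl_def
    by (auto simp: cyl_Int)
qed

lemma Ysig_sa: "sigma_algebra (space P) (Ysig N)"
  unfolding Ysig_def Ycyl_def cyl_def by (intro sigma_algebra_sigma_sets) auto

lemma Wsig_sa: "sigma_algebra (space P) (Wsig N)"
  unfolding Wsig_def Wcyl_def cyl_def by (intro sigma_algebra_sigma_sets) auto

lemma indep_set_mono:
  assumes "Pr.indep_set A B" "A' \<subseteq> A" "B' \<subseteq> B"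
  shows "Pr.indep_set A' B'"
  using assms unfolding Pr.indep_sets2_eq by blast

end

context bicm
begin

abbreviation "Pb \<equiv> Psibar m mu S p"
abbreviation "Q \<equiv> cdf_inv Pb"

lemma p_meas: "s \<in> S \<Longrightarrow> p s \<in> borel_measurable borel"
  using dens borel_measurable_integrable[of lborel "p s"] by simp

lemma qbit_meas: "qbit m mu S p j \<sigma> \<in> borel_measurable borel"
proof -
  have "(\<lambda>y. \<Sum>s\<in>{s\<in>S. bitlab m mu s j = \<sigma>}. p s y) \<in> borel_measurable borel"
    using p_meas by (intro borel_measurable_sum) auto
  then show ?thesis unfolding qbit_def by (intro borel_measurable_times borel_measurable_const)
qed

lemma llr_meas: "llr m mu S p j \<in> borel_measurable borel"
  unfolding llr_def by (intro borel_measurable_ln borel_measurable_divide qbit_meas)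

lemma Pb_bij: "bij_betw Pb (cdf_core Pb) {0<..<1}"
  using A3bar unfolding A3_def by simp

lemma Qcore: "0 < u \<Longrightarrow> u < 1 \<Longrightarrow> Q u \<in> cdf_core Pb"
  using Pb_bij unfolding cdf_inv_def bij_betw_def
  by (intro the_inv_into_into) auto

lemma Qpos: "0 < u \<Longrightarrow> u < 1 \<Longrightarrow> 0 < Q u"
  using Qcore unfolding cdf_core_def by auto

lemma Qc: "continuous_on {0<..<1} Q"
proof (rule continuous_at_imp_continuous_on, rule ballI)
  fix x :: real assume x: "x \<in> {0<..<1}"
  have "((deriv ^^ 0) Q) field_differentiable (at x)"
    using A3bar x unfolding A3_def smooth_on_def by blast
  then show "isCont Q x" by (simp add: field_differentiable_imp_continuous_at)
qed

lemma orb_nonneg: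
  assumes N: "N \<ge> 1"
  shows "0 \<le> orbgrand_metric m Pb N t z"
  unfolding orbgrand_metric_def Let_def
proof (intro mult_nonneg_nonneg sum_nonneg)
  fix k assume k: "k \<in> {1..N} \<times> {1..m}"
  obtain i j where kij: "k = (i, j)" by force
  let ?r = "real (rank ({1..N} \<times> {1..m}) (\<lambda>(i', j'). \<bar>t i' j'\<bar>) (i, j)) / (real m * real N + 1)"
  have "0 < ?r" "?r < 1" using rank_frac[OF m N] k kij by auto
  then have "0 < Q ?r" by (rule Qpos)
  then show "0 \<le> (case k of (i, j) \<Rightarrow> Q (real (rank ({1..N} \<times> {1..m}) (\<lambda>(i', j'). \<bar>t i' j'\<bar>) (i, j)) / (real m * real N + 1)) *
                 (if sgn1 (t i j) * z i j < 0 then 1 else 0))"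
    unfolding kij by simp
qed simp

lemma orb_cong:
  assumes "\<And>i j. i \<in> {1..N} \<Longrightarrow> j \<in> {1..m} \<Longrightarrow> z1 i j = z2 i j"
  shows "orbgrand_metric m Pb N t z1 = orbgrand_metric m Pb N t z2"
  unfolding orbgrand_metric_def Let_def
  using assms by (intro arg_cong2[where f="(*)"] refl sum.cong) auto

definition "Gen N = {(\<lambda>\<omega>'. llr m mu S p j (Y i \<omega>')) -` A \<inter> space P | i j A.
                          i \<in> {1..N} \<and> j \<in> {1..m} \<and> A \<in> sets borel}"
definition "Fsig N = sigma (space P) (Gen N)"
definition "Tm \<omega> = (\<lambda>i j. llr m mu S p j (Y i \<omega>))"
definition "fN N \<omega> = exp (real N * \<theta> * orbgrand_metric m Pb N (Tm \<omega>) (\<lambda>i j. Wc i \<omega> j))"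
definition "G N \<omega> z = exp (real N * \<theta> * orbgrand_metric m Pb N (Tm \<omega>) (\<lambda>i j. z i j))"
definition "cN N = (\<Prod>k\<in>{1..N*m}. 1 + exp (\<theta> / real m * Q (real k / (real m * real N + 1)))) / 2 ^ (N * m)"
definition "Ez N z = {\<omega>\<in>space P. \<forall>i\<in>{1..N}. Wc i \<omega> = z i}"
definition "ZZ N = PiE {1..N} (\<lambda>_. L)"

lemma Gen_Pow: "Gen N \<subseteq> Pow (space P)"
  unfolding Gen_def by auto

lemma sets_Fsig: "sets (Fsig N) = sigma_sets (space P) (Gen N)"
  unfolding Fsig_def using Gen_Pow by (simp add: sets_measure_of)

lemma space_Fsig: "space (Fsig N) = space P"
  unfolding Fsig_def by (simp add: space_measure_of_conv)

lemma Gen_Ycyl: "Gen N \<subseteq> Ycyl N"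
proof
  fix a assume "a \<in> Gen N"
  then obtain i j A where a: "a = (\<lambda>\<omega>'. llr m mu S p j (Y i \<omega>')) -` A \<inter> space P"
    and ijA: "i \<in> {1..N}" "j \<in> {1..m}" "A \<in> sets borel"
    unfolding Gen_def by blast
  define B where "B i' = (if i' = i then llr m mu S p j -` A else UNIV)" for i'
  have "llr m mu S p j -` A \<in> sets borel"
    using measurable_sets[OF llr_meas ijA(3)] by simp
  then have B: "\<forall>i'\<in>{1..N}. B i' \<in> sets borel" unfolding B_def by auto
  have "a = cyl N (\<lambda>_. UNIV) B"
    unfolding a cyl_def B_def using ijA by auto
  then show "a \<in> Ycyl N" unfolding Ycyl_def using B by blast
qed

lemma Fsig_Ysig: "sets (Fsig N) \<subseteq> Ysig N"
  unfolding sets_Fsig Ysig_def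
  by (rule sigma_sets_mono) (use Gen_Ycyl in auto)

lemma Ysig_events: "Ysig N \<subseteq> sets P"
  unfolding Ysig_def Ycyl_def using cyl_sets
  by (intro sets.sigma_sets_subset) auto

lemma subalg: "subalgebra P (Fsig N)"
  unfolding subalgebra_def using Fsig_Ysig Ysig_events space_Fsig by blast

lemma Tm_meas_F: "i \<in> {1..N} \<Longrightarrow> j \<in> {1..m} \<Longrightarrow> (\<lambda>\<omega>. Tm \<omega> i j) \<in> borel_measurable (Fsig N)"
proof (rule measurableI)
  fix A :: "real set" assume "i \<in> {1..N}" "j \<in> {1..m}" "A \<in> sets borel"
  then have "(\<lambda>\<omega>'. llr m mu S p j (Y i \<omega>')) -` A \<inter> space P \<in> Gen N" unfolding Gen_def by blast
  then show "(\<lambda>\<omega>. Tm \<omega> i j) -` A \<inter> space (Fsig N) \<in> sets (Fsig N)"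
    unfolding sets_Fsig space_Fsig Tm_def by auto
qed (simp_all add: space_Fsig)

lemma Tm_meas_P: "(\<lambda>\<omega>. Tm \<omega> i j) \<in> borel_measurable P"
  unfolding Tm_def using llr_meas measY by (intro measurable_compose[OF _ llr_meas]) auto

lemma Wc_meas: "(\<lambda>\<omega>. Wc i \<omega> j) \<in> borel_measurable P"
proof -
  have "(\<lambda>f. f j) \<in> measurable (count_space UNIV) (borel :: real measure)" by simp
  then show ?thesis using measW measurable_compose[of "Wc i" P "count_space UNIV" "\<lambda>f. f j" borel] by simp
qed

lemma G_meas: assumes N: "N \<ge> 1" shows "(\<lambda>\<omega>. G N \<omega> z) \<in> borel_measurable (Fsig N)"
proof -
  have "(\<lambda>\<omega>. orbgrand_metric m Pb N (Tm \<omega>) ((\<lambda>\<omega>. z) \<omega>)) \<in> borel_measurable (Fsig N)"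
    by (rule orb_meas[OF m N Qc]) (auto intro: Tm_meas_F)
  then have "(\<lambda>\<omega>. real N * \<theta> * orbgrand_metric m Pb N (Tm \<omega>) z) \<in> borel_measurable (Fsig N)"
    by (intro borel_measurable_times borel_measurable_const) simp
  then show ?thesis unfolding G_def by (rule measurable_compose[OF _ borel_measurable_exp])
qed

lemma fN_meas: assumes N: "N \<ge> 1" shows "fN N \<in> borel_measurable P"
proof -
  have "(\<lambda>\<omega>. orbgrand_metric m Pb N (Tm \<omega>) ((\<lambda>\<omega> i j. Wc i \<omega> j) \<omega>)) \<in> borel_measurable P"
    by (rule orb_meas[OF m N Qc]) (auto intro: Tm_meas_P Wc_meas)
  then have "(\<lambda>\<omega>. real N * \<theta> * orbgrand_metric m Pb N (Tm \<omega>) (\<lambda>i j. Wc i \<omega> j)) \<in> borel_measurable P"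
    by (intro borel_measurable_times borel_measurable_const) simp
  then show ?thesis unfolding fN_def by (rule measurable_compose[OF _ borel_measurable_exp])
qed

lemma exp_le1: "N \<ge> 1 \<Longrightarrow> 0 \<le> exp (real N * \<theta> * orbgrand_metric m Pb N t z) \<and> exp (real N * \<theta> * orbgrand_metric m Pb N t z) \<le> 1"
proof -
  assume N: "N \<ge> 1"
  have "real N * \<theta> * orbgrand_metric m Pb N t z \<le> 0"
    using orb_nonneg[OF N, of t z] \<theta> N
    by (simp add: mult_nonneg_nonpos mult_nonpos_nonneg)
  then show ?thesis by simp
qed

end

context bicm
begin

lemma Ez_cyl: "Ez N z = cyl N (\<lambda>i. {z i}) (\<lambda>_. UNIV)"
  unfolding Ez_def cyl_def by auto

lemma Ez_sets: "Ez N z \<in> sets P"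
  unfolding Ez_cyl by (rule cyl_sets) auto

lemma Ez_prob:
  assumes N: "N \<ge> 1" and z: "z \<in> ZZ N"
  shows "Pr.prob (Ez N z) = 1 / 2 ^ (N * m)"
proof -
  have "Pr.prob (Ez N z) = (\<Prod>i\<in>{1..N}. Pr.prob {\<omega>\<in>space P. Wc i \<omega> \<in> {z i} \<and> Y i \<omega> \<in> UNIV})"
    unfolding Ez_cyl by (rule cyl_prob[OF N]) auto
  also have "\<dots> = (\<Prod>i\<in>{1..N}. 1 / 2 ^ m)"
  proof (intro prod.cong refl)
    fix i assume i: "i \<in> {1..N}"
    then have "z i \<in> L" using z unfolding ZZ_def by auto
    then have "{z i} \<inter> L = {z i}" by auto
    then show "Pr.prob {\<omega>\<in>space P. Wc i \<omega> \<in> {z i} \<and> Y i \<omega> \<in> UNIV} = 1 / 2 ^ m"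
      using marg_W[of i "{z i}"] by simp
  qed
  also have "\<dots> = 1 / 2 ^ (N * m)"
  proof -
    have "(2::real) ^ (N * m) = (2 ^ m) ^ N" by (simp add: power_mult[symmetric] mult.commute)
    then show ?thesis by (simp add: power_one_over)
  qed
  finally show ?thesis .
qed

lemma Ez_Wsig: "Ez N z \<in> Wsig N"
  unfolding Ez_cyl Wsig_def Wcyl_def by (intro sigma_sets.Basic) blast

lemma G_bound: "N \<ge> 1 \<Longrightarrow> 0 \<le> G N \<omega> z \<and> G N \<omega> z \<le> 1"
  unfolding G_def using exp_le1 by blast

lemma fN_bound: "N \<ge> 1 \<Longrightarrow> 0 \<le> fN N \<omega> \<and> fN N \<omega> \<le> 1"
  unfolding fN_def using exp_le1 by blast

lemma indep_prod:
  assumes N: "N \<ge> 1" and A: "A \<in> sets (Fsig N)"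
  shows "(\<integral>\<omega>. (indicator A \<omega> * G N \<omega> z) * indicator (Ez N z) \<omega> \<partial>P)
       = (\<integral>\<omega>. indicator A \<omega> * G N \<omega> z \<partial>P) * Pr.prob (Ez N z)"
proof -
  define X1 where "X1 \<omega> = indicator A \<omega> * G N \<omega> z" for \<omega>
  define X2 where "X2 = (indicator (Ez N z) :: 'w \<Rightarrow> real)"
  have X1F: "X1 \<in> borel_measurable (Fsig N)"
    unfolding X1_def using A G_meas[OF N] by (intro borel_measurable_times) auto
  have X1P: "X1 \<in> borel_measurable P" by (rule measurable_from_subalg[OF subalg X1F])
  have X2P: "X2 \<in> borel_measurable P" unfolding X2_def using Ez_sets by simp
  have s1: "sigma_sets (space P) {X1 -` S \<inter> space P | S. S \<in> sets borel} \<subseteq> Ysig N"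
  proof (rule sigma_algebra.sigma_sets_subset[OF Ysig_sa])
    show "{X1 -` S \<inter> space P | S. S \<in> sets borel} \<subseteq> Ysig N"
    proof safe
      fix S :: "real set" assume "S \<in> sets borel"
      then have "X1 -` S \<inter> space (Fsig N) \<in> sets (Fsig N)" by (rule measurable_sets[OF X1F])
      then show "X1 -` S \<inter> space P \<in> Ysig N" using Fsig_Ysig space_Fsig by auto
    qed
  qed
  have s2: "sigma_sets (space P) {X2 -` S \<inter> space P | S. S \<in> sets borel} \<subseteq> Wsig N"
  proof (rule sigma_algebra.sigma_sets_subset[OF Wsig_sa])
    show "{X2 -` S \<inter> space P | S. S \<in> sets borel} \<subseteq> Wsig N"
    proof safe
      fix S :: "real set"
      have E: "Ez N z \<in> Wsig N" by (rule Ez_Wsig)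
      have Esub: "Ez N z \<subseteq> space P" unfolding Ez_def by auto
      have eq: "X2 -` S \<inter> space P = (if 1 \<in> S then Ez N z else {}) \<union> (if 0 \<in> S then space P - Ez N z else {})"
        unfolding X2_def using Esub by (auto simp: indicator_def of_bool_def split: if_splits)
      have "space P - Ez N z \<in> Wsig N" unfolding Wsig_def by (rule sigma_sets.Compl) (use E Wsig_def in simp)
      moreover have "{} \<in> Wsig N" unfolding Wsig_def by (rule sigma_sets.Empty)
      ultimately show "X2 -` S \<inter> space P \<in> Wsig N"
        unfolding eq Wsig_def using E unfolding Wsig_def by (intro sigma_sets_Un) auto
    qed
  qed
  have iv: "Pr.indep_var borel X1 borel X2"
    unfolding Pr.indep_var_eq
    using X1P X2P indep_set_mono[OF indep_YW[OF N] s1 s2] by simp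
  have i1: "integrable P X1"
    using X1P G_bound[OF N] by (intro Pr.integrable_const_bound[where B=1]) (auto simp: X1_def indicator_def)
  have i2: "integrable P X2"
    using X2P by (intro Pr.integrable_const_bound[where B=1]) (auto simp: X2_def indicator_def)
  have "(\<integral>\<omega>. X1 \<omega> * X2 \<omega> \<partial>P) = (\<integral>\<omega>. X1 \<omega> \<partial>P) * (\<integral>\<omega>. X2 \<omega> \<partial>P)"
    by (rule Pr.indep_var_lebesgue_integral[OF iv i1 i2])
  moreover have "(\<integral>\<omega>. X2 \<omega> \<partial>P) = Pr.prob (Ez N z)"
    unfolding X2_def using Ez_sets by simp
  ultimately show ?thesis unfolding X1_def X2_def by simp
qed

end

context bicm
begin

lemma finZZ: "finite (ZZ (N::nat))" unfolding ZZ_def by (intro finite_PiE) (use finL in auto)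

lemma repr:
  assumes N: "N \<ge> 1"
  shows "AE \<omega> in P. fN N \<omega> = (\<Sum>z\<in>ZZ N. G N \<omega> z * indicator (Ez N z) \<omega>)"
proof -
  have "AE \<omega> in P. \<forall>i\<in>{1..N}. Wc i \<omega> \<in> L"
    using good_AE by (subst AE_finite_all) (auto elim: AE_mp)
  then show ?thesis
  proof (rule AE_mp[OF _ AE_I2], intro impI)
    fix \<omega> assume \<omega>: "\<omega> \<in> space P" and W: "\<forall>i\<in>{1..N}. Wc i \<omega> \<in> L"
    define z0 where "z0 = restrict (\<lambda>i. Wc i \<omega>) {1..N}"
    have z0: "z0 \<in> ZZ N" unfolding z0_def ZZ_def using W by auto
    have mem: "\<omega> \<in> Ez N z \<longleftrightarrow> z = z0" if "z \<in> ZZ N" for z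
    proof
      assume "\<omega> \<in> Ez N z"
      then have "\<forall>i\<in>{1..N}. Wc i \<omega> = z i" unfolding Ez_def by auto
      then show "z = z0" using that unfolding z0_def ZZ_def
        by (intro PiE_ext[of _ "{1..N}" "\<lambda>_. L"]) auto
    next
      assume "z = z0"
      then show "\<omega> \<in> Ez N z" using \<omega> unfolding Ez_def z0_def by auto
    qed
    have "(\<Sum>z\<in>ZZ N. G N \<omega> z * indicator (Ez N z) \<omega>) = (\<Sum>z\<in>ZZ N. if z = z0 then G N \<omega> z else 0)"
      using mem by (intro sum.cong refl) (auto simp: indicator_def)
    also have "\<dots> = G N \<omega> z0" using z0 by (simp add: sum.delta[OF finZZ])
    also have "\<dots> = fN N \<omega>"
      unfolding G_def fN_def
      by (rule arg_cong[where f=exp], rule arg_cong[where f="(*) (real N * \<theta>)"], rule orb_cong) (auto simp: z0_def)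
    finally show "fN N \<omega> = (\<Sum>z\<in>ZZ N. G N \<omega> z * indicator (Ez N z) \<omega>)" ..
  qed
qed

lemma sumG:
  assumes N: "N \<ge> 1"
  shows "(\<Sum>z\<in>ZZ N. G N \<omega> z) = cN N * 2 ^ (N * m)"
  unfolding G_def ZZ_def cN_def using cond_sum[OF m N, of \<theta> Pb "Tm \<omega>"] by simp

lemma set_int:
  assumes N: "N \<ge> 1" and A: "A \<in> sets (Fsig N)"
  shows "set_lebesgue_integral P A (fN N) = set_lebesgue_integral P A (\<lambda>_. cN N)"
proof -
  have AP: "A \<in> sets P" using A subalg[of N] unfolding subalgebra_def by auto
  have GP: "(\<lambda>\<omega>. G N \<omega> z) \<in> borel_measurable P" for z
    by (rule measurable_from_subalg[OF subalg G_meas[OF N]])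
  have int1: "integrable P (\<lambda>\<omega>. (indicator A \<omega> * G N \<omega> z) * indicator (Ez N z) \<omega>)" for z
    using AP GP Ez_sets G_bound[OF N]
    by (intro Pr.integrable_const_bound[where B=1]) (auto simp: indicator_def)
  have int2: "integrable P (\<lambda>\<omega>. indicator A \<omega> * G N \<omega> z)" for z
    using AP GP G_bound[OF N]
    by (intro Pr.integrable_const_bound[where B=1]) (auto simp: indicator_def)
  have "set_lebesgue_integral P A (fN N) = (\<integral>\<omega>. indicator A \<omega> * fN N \<omega> \<partial>P)"
    unfolding set_lebesgue_integral_def by simp
  also have "\<dots> = (\<integral>\<omega>. (\<Sum>z\<in>ZZ N. (indicator A \<omega> * G N \<omega> z) * indicator (Ez N z) \<omega>) \<partial>P)"
  proof (rule integral_cong_AE)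
    show "(\<lambda>\<omega>. indicator A \<omega> * fN N \<omega>) \<in> borel_measurable P"
      using AP fN_meas[OF N] by simp
    show "(\<lambda>\<omega>. \<Sum>z\<in>ZZ N. (indicator A \<omega> * G N \<omega> z) * indicator (Ez N z) \<omega>) \<in> borel_measurable P"
      using int1 by (intro borel_measurable_sum) auto
    show "AE \<omega> in P. indicator A \<omega> * fN N \<omega> = (\<Sum>z\<in>ZZ N. (indicator A \<omega> * G N \<omega> z) * indicator (Ez N z) \<omega>)"
      using repr[OF N] by (rule AE_mp) (auto intro!: AE_I2 simp: sum_distrib_left mult.assoc)
  qed
  also have "\<dots> = (\<Sum>z\<in>ZZ N. (\<integral>\<omega>. (indicator A \<omega> * G N \<omega> z) * indicator (Ez N z) \<omega> \<partial>P))"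
    using int1 by (subst Bochner_Integration.integral_sum) auto
  also have "\<dots> = (\<Sum>z\<in>ZZ N. (\<integral>\<omega>. indicator A \<omega> * G N \<omega> z \<partial>P) / 2 ^ (N * m))"
    using indep_prod[OF N A] Ez_prob[OF N] by (intro sum.cong refl) simp
  also have "\<dots> = (\<integral>\<omega>. (\<Sum>z\<in>ZZ N. indicator A \<omega> * G N \<omega> z) / 2 ^ (N * m) \<partial>P)"
  proof -
    have "(\<Sum>z\<in>ZZ N. (\<integral>\<omega>. indicator A \<omega> * G N \<omega> z \<partial>P) / 2 ^ (N * m))
        = (\<Sum>z\<in>ZZ N. (\<integral>\<omega>. indicator A \<omega> * G N \<omega> z \<partial>P)) / 2 ^ (N * m)"
      by (simp add: sum_divide_distrib)
    also have "\<dots> = (\<integral>\<omega>. (\<Sum>z\<in>ZZ N. indicator A \<omega> * G N \<omega> z) \<partial>P) / 2 ^ (N * m)"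
      by (subst Bochner_Integration.integral_sum) (auto intro: int2)
    also have "\<dots> = (\<integral>\<omega>. (\<Sum>z\<in>ZZ N. indicator A \<omega> * G N \<omega> z) / 2 ^ (N * m) \<partial>P)"
      by (rule integral_divide_zero[symmetric])
    finally show ?thesis .
  qed
  also have "\<dots> = (\<integral>\<omega>. indicator A \<omega> * cN N \<partial>P)"
    by (intro Bochner_Integration.integral_cong refl) (simp add: sum_distrib_left[symmetric] sumG[OF N])
  also have "\<dots> = set_lebesgue_integral P A (\<lambda>_. cN N)"
    unfolding set_lebesgue_integral_def by simp
  finally show ?thesis .
qed

lemma S1:
  assumes N: "N \<ge> 1"
  shows "AE \<omega> in P. real_cond_exp P (Fsig N) (fN N) \<omega> = cN N"
proof -
  have "finite_measure_subalgebra P (Fsig N)"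
    unfolding finite_measure_subalgebra_def finite_measure_subalgebra_axioms_def
    using subalg Pr.finite_measure_axioms by simp
  then interpret F: sigma_finite_subalgebra P "Fsig N"
    by (rule finite_measure_subalgebra_is_sigma_finite)
  show ?thesis
  proof (rule F.real_cond_exp_charact)
    show "set_lebesgue_integral P A (fN N) = set_lebesgue_integral P A (\<lambda>_. cN N)" if "A \<in> sets (Fsig N)" for A
      by (rule set_int[OF N that])
    show "integrable P (fN N)"
      using fN_meas[OF N] fN_bound[OF N] by (intro Pr.integrable_const_bound[where B=1]) auto
    show "integrable P (\<lambda>_. cN N)" by simp
    show "(\<lambda>_. cN N) \<in> borel_measurable (Fsig N)" by simp
  qed
qed

end

context bicm
begin

definition "qbar j y = (qbit m mu S p j 1 y + qbit m mu S p j (-1) y) / 2"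

lemma bitlab_pm: "s \<in> S \<Longrightarrow> j \<in> {1..m} \<Longrightarrow> bitlab m mu s j = 1 \<or> bitlab m mu s j = -1"
proof -
  assume s: "s \<in> S" and j: "j \<in> {1..m}"
  have "s \<in> mu ` L" using mu s by (auto simp: bij_betw_def)
  then have "inv_into L mu s \<in> L" by (rule inv_into_into)
  then show ?thesis using j unfolding bitlab_def label_set_def by (auto simp: PiE_iff)
qed

lemma qbar_eq: "j \<in> {1..m} \<Longrightarrow> qbar j y = (1 / 2 ^ m) * (\<Sum>s\<in>S. p s y)"
proof -
  assume j: "j \<in> {1..m}"
  have S_split: "S = {s\<in>S. bitlab m mu s j = 1} \<union> {s\<in>S. bitlab m mu s j = -1}"
    using bitlab_pm[OF _ j] by auto
  have "(\<Sum>s\<in>S. p s y) = (\<Sum>s\<in>{s\<in>S. bitlab m mu s j = 1}. p s y) + (\<Sum>s\<in>{s\<in>S. bitlab m mu s j = -1}. p s y)"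
    by (subst S_split, rule sum.union_disjoint) (use finS in auto)
  moreover have "(2::real) ^ m = 2 * 2 ^ (m - 1)" using m by (cases m) auto
  ultimately show ?thesis unfolding qbar_def qbit_def by (simp add: field_simps)
qed

lemma qbar_meas: "qbar j \<in> borel_measurable borel"
  unfolding qbar_def by (intro borel_measurable_divide borel_measurable_add qbit_meas borel_measurable_const)

lemma qbar_nonneg: "j \<in> {1..m} \<Longrightarrow> 0 \<le> qbar j y"
proof -
  assume j: "j \<in> {1..m}"
  have "0 \<le> (\<Sum>s\<in>S. p s y)" using dens by (intro sum_nonneg) auto
  then show ?thesis by (simp add: qbar_eq[OF j])
qed

lemma qbar_int: "j \<in> {1..m} \<Longrightarrow> integrable lborel (qbar j)"
proof -
  assume j: "j \<in> {1..m}"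
  have "integrable lborel (\<lambda>y. (1 / 2 ^ m) * (\<Sum>s\<in>S. p s y))"
    using dens by (intro integrable_mult_right Bochner_Integration.integrable_sum) auto
  moreover have "qbar j = (\<lambda>y. (1 / 2 ^ m) * (\<Sum>s\<in>S. p s y))" using qbar_eq[OF j] by auto
  ultimately show ?thesis by simp
qed

lemma qbar_one: "j \<in> {1..m} \<Longrightarrow> (\<integral>y. qbar j y \<partial>lborel) = 1"
proof -
  assume j: "j \<in> {1..m}"
  have si: "(\<integral>y. (\<Sum>s\<in>S. p s y) \<partial>lborel) = (\<Sum>s\<in>S. (\<integral>y. p s y \<partial>lborel))"
    using dens by (intro Bochner_Integration.integral_sum) auto
  have "(\<integral>y. qbar j y \<partial>lborel) = (\<integral>y. (1 / 2 ^ m) * (\<Sum>s\<in>S. p s y) \<partial>lborel)"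
    using qbar_eq[OF j] by simp
  also have "\<dots> = (1 / 2 ^ m) * (\<integral>y. (\<Sum>s\<in>S. p s y) \<partial>lborel)"
    by (rule integral_mult_right_zero)
  also have "\<dots> = (1 / 2 ^ m) * (\<Sum>s\<in>S. (\<integral>y. p s y \<partial>lborel))"
    by (simp only: si)
  also have "\<dots> = (1 / 2 ^ m) * card S" using dens by simp
  finally show ?thesis using cardS by simp
qed

lemma absllr_meas: "(\<lambda>y. \<bar>llr m mu S p j y\<bar>) \<in> borel_measurable lborel"
  using llr_meas by (intro borel_measurable_abs) simp

lemma absllr_meas': "(\<lambda>y. \<bar>llr m mu S p j y\<bar>) \<in> borel_measurable borel"
  using llr_meas by (intro borel_measurable_abs) simp

definition "Dmix = density (count_space {1..m} \<Otimes>\<^sub>M lborel) (\<lambda>(j,y). ennreal (qbar j y / real m))"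
definition "\<mu>mix = distr Dmix borel (\<lambda>(j,y). \<bar>llr m mu S p j y\<bar>)"

lemmas mix = mixture[OF m, of qbar "\<lambda>j y. \<bar>llr m mu S p j y\<bar>", folded Dmix_def \<mu>mix_def]

lemma mix_rd: "real_distribution \<mu>mix"
  by (rule mix(1)) (auto simp: qbar_meas qbar_nonneg qbar_int qbar_one absllr_meas')

lemma mix_int: "Gf \<in> borel_measurable borel \<Longrightarrow> (\<And>x. 0 \<le> Gf x) \<Longrightarrow> (\<And>x. Gf x \<le> C) \<Longrightarrow>
    (\<integral>x. Gf x \<partial>\<mu>mix) = (1 / real m) * (\<Sum>j=1..m. \<integral>y. qbar j y * Gf \<bar>llr m mu S p j y\<bar> \<partial>lborel)"
  by (rule mix(2)) (auto simp: qbar_meas qbar_nonneg qbar_int qbar_one absllr_meas')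

lemma Psi_int: "j \<in> {1..m} \<Longrightarrow> Psi m mu S p j t = (\<integral>y. qbar j y * indicator {..t} \<bar>llr m mu S p j y\<bar> \<partial>lborel)"
proof -
  assume j: "j \<in> {1..m}"
  have A: "{y. \<bar>llr m mu S p j y\<bar> \<le> t} \<in> sets lborel"
    using absllr_meas by measurable
  have "Psi m mu S p j t = measure (density lborel (\<lambda>y. ennreal (qbar j y))) {y. \<bar>llr m mu S p j y\<bar> \<le> t}"
    unfolding Psi_def qbar_def ..
  also have "\<dots> = enn2real (\<integral>\<^sup>+y. ennreal (qbar j y) * indicator {y. \<bar>llr m mu S p j y\<bar> \<le> t} y \<partial>lborel)"
    unfolding measure_def using A qbar_meas by (subst emeasure_density) auto
  also have "(\<integral>\<^sup>+y. ennreal (qbar j y) * indicator {y. \<bar>llr m mu S p j y\<bar> \<le> t} y \<partial>lborel)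
      = (\<integral>\<^sup>+y. ennreal (qbar j y * indicator {..t} \<bar>llr m mu S p j y\<bar>) \<partial>lborel)"
    by (intro nn_integral_cong) (auto simp: indicator_def)
  also have "\<dots> = ennreal (\<integral>y. qbar j y * indicator {..t} \<bar>llr m mu S p j y\<bar> \<partial>lborel)"
  proof (rule nn_integral_eq_integral)
    show "integrable lborel (\<lambda>y. qbar j y * indicator {..t} \<bar>llr m mu S p j y\<bar>)"
    proof (rule Bochner_Integration.integrable_bound[OF qbar_int[OF j]])
      show "(\<lambda>y. qbar j y * indicator {..t} \<bar>llr m mu S p j y\<bar>) \<in> borel_measurable lborel"
        using qbar_meas absllr_meas by measurable
      show "AE y in lborel. norm (qbar j y * indicator {..t} \<bar>llr m mu S p j y\<bar>) \<le> norm (qbar j y)"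
        using qbar_nonneg[OF j] by (auto simp: indicator_def)
    qed
    show "AE y in lborel. 0 \<le> qbar j y * indicator {..t} \<bar>llr m mu S p j y\<bar>"
      using qbar_nonneg[OF j] by auto
  qed
  finally show ?thesis using qbar_nonneg[OF j] by (simp add: integral_nonneg_AE)
qed

lemma mix_cdf: "measure \<mu>mix {..t} = Pb t"
proof -
  interpret rd: real_distribution \<mu>mix by (rule mix_rd)
  have "measure \<mu>mix {..t} = (\<integral>x. indicator {..t} x \<partial>\<mu>mix)" by simp
  also have "\<dots> = (1 / real m) * (\<Sum>j=1..m. \<integral>y. qbar j y * indicator {..t} \<bar>llr m mu S p j y\<bar> \<partial>lborel)"
    by (rule mix_int[where C=1]) auto
  also have "\<dots> = Pb t" unfolding Psibar_def using Psi_int by simp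
  finally show ?thesis .
qed

lemma Pb_neg: "t < 0 \<Longrightarrow> Pb t = 0"
proof -
  assume t: "t < 0"
  have "Psi m mu S p j t = 0" for j
  proof -
    have "{y. \<bar>llr m mu S p j y\<bar> \<le> t} = {}" using t by auto
    then show ?thesis unfolding Psi_def by simp
  qed
  then show ?thesis unfolding Psibar_def by simp
qed

lemma Pb_mono: "mono Pb"
proof -
  interpret rd: real_distribution \<mu>mix by (rule mix_rd)
  show ?thesis unfolding mono_def mix_cdf[symmetric]
    by (intro allI impI rd.finite_measure_mono) auto
qed

lemmas Qprops = cdf_core_props[OF Pb_mono Pb_neg Pb_bij]

lemma Q_mono: "0 < u \<Longrightarrow> u \<le> v \<Longrightarrow> v < 1 \<Longrightarrow> Q u \<le> Q v"
  using Qprops(2)[of v] Qprops(3)[of u "Q v"] by auto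

end

context bicm
begin

definition "gq t = ln (1 + exp (\<theta> / real m * \<bar>t\<bar>))"
definition "\<phi> u = ln ((1 + exp (\<theta> / real m * Q u)) / 2)"

lemma one_plus_exp_ne [simp]: "1 + exp x \<noteq> (0::real)"
  using exp_gt_zero[of x] by linarith

lemma thm_neg: "\<theta> / real m < 0" using \<theta> m by (simp add: divide_neg_pos)

lemma gq_meas: "gq \<in> borel_measurable borel"
  unfolding gq_def by measurable

lemma gq_bounds: "0 \<le> gq t \<and> gq t \<le> ln 2"
proof -
  have "\<theta> / real m * \<bar>t\<bar> \<le> 0" using thm_neg by (intro mult_nonpos_nonneg) auto
  then have a: "exp (\<theta> / real m * \<bar>t\<bar>) \<le> 1" by simp
  have b: "1 + exp (\<theta> / real m * \<bar>t\<bar>) \<le> 2" using a by simp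
  have c: "ln (1 + exp (\<theta> / real m * \<bar>t\<bar>)) \<le> ln 2"
    using b by (subst ln_le_cancel_iff) (auto simp: add_pos_pos)
  have d: "0 \<le> ln (1 + exp (\<theta> / real m * \<bar>t\<bar>))" by (rule ln_ge_zero) simp
  show ?thesis unfolding gq_def using c d by simp
qed

lemma int_gq: "(\<integral>u. indicator {0<..<1} u * gq (Q u) \<partial>lborel)
   = (1 / real m) * (\<Sum>j=1..m. \<integral>y. (qbit m mu S p j 1 y + qbit m mu S p j (-1) y) / 2
                             * ln (1 + exp (\<theta> / real m * \<bar>llr m mu S p j y\<bar>)) \<partial>lborel)"
proof -
  have "(\<integral>u. indicator {0<..<1} u * gq (Q u) \<partial>lborel) = (\<integral>x. gq x \<partial>\<mu>mix)"
    by (rule quantile_integral[OF mix_rd mix_cdf Pb_neg Pb_bij Qc gq_meas, symmetric])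
  also have "\<dots> = (1 / real m) * (\<Sum>j=1..m. \<integral>y. qbar j y * gq \<bar>llr m mu S p j y\<bar> \<partial>lborel)"
    by (rule mix_int[OF gq_meas, of "ln 2"]) (use gq_bounds in auto)
  also have "\<dots> = (1 / real m) * (\<Sum>j=1..m. \<integral>y. (qbit m mu S p j 1 y + qbit m mu S p j (-1) y) / 2
                             * ln (1 + exp (\<theta> / real m * \<bar>llr m mu S p j y\<bar>)) \<partial>lborel)"
    unfolding qbar_def gq_def by simp
  finally show ?thesis .
qed

lemma phi_eq: "0 < u \<Longrightarrow> u < 1 \<Longrightarrow> \<phi> u = gq (Q u) - ln 2"
proof -
  assume u: "0 < u" "u < 1"
  have "0 < Q u" by (rule Qpos[OF u])
  moreover have "0 < 1 + exp (\<theta> / real m * Q u)" by (simp add: add_pos_pos)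
  ultimately show ?thesis unfolding \<phi>_def gq_def by (simp add: ln_div)
qed

lemma gqQ_cont: "continuous_on {0<..<1} (\<lambda>u. gq (Q u))"
  unfolding gq_def
  by (intro continuous_intros Qc) (auto simp: add_pos_pos)

lemma phi_cont: "continuous_on {0<..<1} \<phi>"
  unfolding \<phi>_def
  by (intro continuous_intros Qc) (auto simp: add_pos_pos)

lemma phi_mono: "0 < u \<Longrightarrow> u \<le> v \<Longrightarrow> v < 1 \<Longrightarrow> \<phi> v \<le> \<phi> u"
proof -
  assume uv: "0 < u" "u \<le> v" "v < 1"
  have "Q u \<le> Q v" by (rule Q_mono[OF uv])
  then have "\<theta> / real m * Q v \<le> \<theta> / real m * Q u"
    by (rule mult_left_mono_neg) (use thm_neg in auto)
  then have "exp (\<theta> / real m * Q v) \<le> exp (\<theta> / real m * Q u)" by simp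
  then show ?thesis unfolding \<phi>_def by (simp add: add_pos_pos)
qed

lemma phi_bound: "0 < u \<Longrightarrow> u < 1 \<Longrightarrow> \<bar>\<phi> u\<bar> \<le> ln 2"
  using phi_eq[of u] gq_bounds[of "Q u"] by (simp add: abs_le_iff)

lemma int_phi: "(\<integral>u. indicator {0<..<1} u * \<phi> u \<partial>lborel)
   = (\<integral>u. indicator {0<..<1} u * gq (Q u) \<partial>lborel) - ln 2"
proof -
  have i1: "integrable lborel (\<lambda>u. indicator {0<..<1::real} u * gq (Q u))"
  proof -
    have "(\<lambda>u. indicator {0<..<1::real} u *\<^sub>R gq (Q u)) \<in> borel_measurable borel"
      by (rule borel_measurable_continuous_on_indicator[OF _ gqQ_cont]) simp
    then have m1: "(\<lambda>u. indicator {0<..<1::real} u * gq (Q u)) \<in> borel_measurable lborel" by simp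
    show ?thesis
    proof (rule integrableI_bounded_set[where A="{0<..<1}" and B="ln 2", OF _ m1])
      show "AE x\<in>{0<..<1} in lborel. norm (indicator {0<..<1::real} x * gq (Q x)) \<le> ln 2"
        using gq_bounds by (auto simp: indicator_def)
      show "AE x in lborel. x \<notin> {0<..<1} \<longrightarrow> indicator {0<..<1::real} x * gq (Q x) = 0"
        by auto
    qed simp_all
  qed
  have i2: "integrable lborel (\<lambda>u. indicator {0<..<1::real} u * (ln 2 :: real))"
    using integrable_real_indicator[of "{0<..<1::real}" lborel]
    by (intro integrable_mult_left) auto
  have "(\<integral>u. indicator {0<..<1} u * \<phi> u \<partial>lborel)
      = (\<integral>u. indicator {0<..<1} u * gq (Q u) - indicator {0<..<1::real} u * (ln 2 :: real) \<partial>lborel)"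
    using phi_eq by (intro Bochner_Integration.integral_cong) (auto simp: indicator_def)
  also have "\<dots> = (\<integral>u. indicator {0<..<1} u * gq (Q u) \<partial>lborel) - (\<integral>u. indicator {0<..<1::real} u * (ln 2 :: real) \<partial>lborel)"
    by (rule Bochner_Integration.integral_diff[OF i1 i2])
  also have "(\<integral>u. indicator {0<..<1::real} u * (ln 2 :: real) \<partial>lborel) = ln 2"
    by simp
  finally show ?thesis .
qed

end

context bicm
begin

lemma lncN:
  assumes N: "N \<ge> 1"
  shows "ln (cN N) = (\<Sum>k=1..N*m. \<phi> (real k / (real m * real N + 1)))"
proof -
  define a where "a k = 1 + exp (\<theta> / real m * Q (real k / (real m * real N + 1)))" for k :: nat
  have apos: "0 < a k" for k unfolding a_def by (simp add: add_pos_pos)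
  have "cN N = (\<Prod>k\<in>{1..N*m}. a k) / 2 ^ (N * m)" unfolding cN_def a_def ..
  also have "\<dots> = (\<Prod>k\<in>{1..N*m}. a k / 2)"
    by (simp add: prod_dividef)
  finally have "ln (cN N) = ln (\<Prod>k\<in>{1..N*m}. a k / 2)" by simp
  also have "\<dots> = (\<Sum>k\<in>{1..N*m}. ln (a k / 2))"
    using apos by (intro ln_prod) (auto simp: less_imp_neq[symmetric])
  finally show ?thesis unfolding \<phi>_def a_def .
qed

definition "I\<phi> = (\<integral>u. indicator {0<..<1} u * \<phi> u \<partial>lborel)"

lemma limit: "(\<lambda>N. ln (cN N) / real N) \<longlonglongrightarrow> real m * I\<phi>"
proof -
  define a where "a M = (\<Sum>k=1..M. \<phi> (real k / (real M + 1))) / real M" for M :: nat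
  have la: "a \<longlonglongrightarrow> I\<phi>"
    unfolding a_def I\<phi>_def by (rule riemann_antimono[OF phi_cont phi_mono phi_bound])
  have sm: "strict_mono (\<lambda>N. N * m)"
    using m by (auto simp: strict_mono_def)
  have "(a \<circ> (\<lambda>N. N * m)) \<longlonglongrightarrow> I\<phi>" by (rule LIMSEQ_subseq_LIMSEQ[OF la sm])
  then have l2: "(\<lambda>N. real m * a (N * m)) \<longlonglongrightarrow> real m * I\<phi>"
    by (intro tendsto_mult_left) (simp add: comp_def)
  have ev: "\<forall>\<^sub>F N in sequentially. real m * a (N * m) = ln (cN N) / real N"
    using eventually_ge_at_top[of "1::nat"]
  proof (rule eventually_mono)
    fix N :: nat assume N: "N \<ge> 1"
    have r: "real (N * m) = real m * real N" by simp
    have "real m * a (N * m) = real m * ((\<Sum>k=1..N*m. \<phi> (real k / (real m * real N + 1))) / (real m * real N))"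
      unfolding a_def r ..
    also have "\<dots> = (\<Sum>k=1..N*m. \<phi> (real k / (real m * real N + 1))) / real N"
      using m N by (simp add: field_simps)
    also have "\<dots> = ln (cN N) / real N" using lncN[OF N] by simp
    finally show "real m * a (N * m) = ln (cN N) / real N" .
  qed
  show ?thesis by (rule Lim_transform_eventually[OF l2 ev])
qed

lemma limit_value:
  "real m * I\<phi> = (\<Sum>j=1..m. (\<integral>y. (qbit m mu S p j 1 y + qbit m mu S p j (-1) y) / 2
                             * ln (1 + exp (\<theta> / real m * \<bar>llr m mu S p j y\<bar>)) \<partial>lborel))
             - real m * ln 2"
  unfolding I\<phi>_def int_phi int_gq using m by (simp add: right_diff_distrib)

end

theorem lemma6:
  fixes m :: nat and S :: "'s set" and mu :: "(nat \<Rightarrow> real) \<Rightarrow> 's"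
    and p :: "'s \<Rightarrow> 'y::euclidean_space \<Rightarrow> real"
    and P :: "'w measure"
    and X :: "nat \<Rightarrow> 'w \<Rightarrow> (nat \<Rightarrow> real)"
    and Wc :: "nat \<Rightarrow> 'w \<Rightarrow> (nat \<Rightarrow> real)"
    and Y :: "nat \<Rightarrow> 'w \<Rightarrow> 'y"
    and \<theta> :: real
  assumes m: "m \<ge> 1"
    and mu: "bij_betw mu (label_set m) S"
    and dens: "\<forall>s\<in>S. (\<forall>y. 0 \<le> p s y) \<and> integrable lborel (p s) \<and> (\<integral>y. p s y \<partial>lborel) = 1"
    and A1: "\<forall>j\<in>{1..m}. \<exists>M1>0. \<exists>a>0. \<exists>S1 :: real poly. \<forall>y. norm y > M1 \<longrightarrow>
               qbit m mu S p j 1 y < poly S1 (norm y) * exp (- a * norm y) \<and>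
               qbit m mu S p j (-1) y < poly S1 (norm y) * exp (- a * norm y)"
    and A2: "\<forall>j\<in>{1..m}. \<exists>M2>0. \<exists>S2 :: real poly. \<forall>y. norm y > M2 \<longrightarrow>
               \<bar>llr m mu S p j y\<bar> < poly S2 (norm y)"
    and A3j: "\<forall>j\<in>{1..m}. A3 (Psi m mu S p j)"
    and A3bar: "A3 (Psibar m mu S p)"
    and P: "prob_space P"
    and measX: "\<forall>i. X i \<in> measurable P (count_space UNIV)"
    and measW: "\<forall>i. Wc i \<in> measurable P (count_space UNIV)"
    and measY: "\<forall>i. Y i \<in> borel_measurable P"
    and indep: "prob_space.indep_vars P
                  (\<lambda>_. count_space UNIV \<Otimes>\<^sub>M count_space UNIV \<Otimes>\<^sub>M borel)
                  (\<lambda>i \<omega>. (X i \<omega>, Wc i \<omega>, Y i \<omega>)) UNIV"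
    and law: "\<forall>i b c A. b \<in> label_set m \<longrightarrow> c \<in> label_set m \<longrightarrow> A \<in> sets borel \<longrightarrow>
                measure P {\<omega>\<in>space P. X i \<omega> = b \<and> Wc i \<omega> = c \<and> Y i \<omega> \<in> A}
                  = (1 / 2 ^ m) * (1 / 2 ^ m) * (\<integral>y. indicator A y * p (mu b) y \<partial>lborel)"
    and \<theta>: "\<theta> < 0"
  shows "AE \<omega> in P.
           (\<lambda>N. ln (real_cond_exp P
                    (sigma (space P)
                       {(\<lambda>\<omega>'. llr m mu S p j (Y i \<omega>')) -` A \<inter> space P | i j A.
                          i \<in> {1..N} \<and> j \<in> {1..m} \<and> A \<in> sets borel})
                    (\<lambda>\<omega>'. exp (real N * \<theta> *
                        orbgrand_metric m (Psibar m mu S p) N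
                          (\<lambda>i j. llr m mu S p j (Y i \<omega>')) (\<lambda>i j. Wc i \<omega>' j)))
                    \<omega>) / real N)
           \<longlonglongrightarrow>
           (\<Sum>j=1..m. (\<integral>y. (qbit m mu S p j 1 y + qbit m mu S p j (-1) y) / 2
                             * ln (1 + exp (\<theta> / real m * \<bar>llr m mu S p j y\<bar>)) \<partial>lborel))
             - real m * ln 2"
proof -
  interpret bicm m S mu p P X Wc Y \<theta>
    by (rule bicm.intro[OF m mu dens A3bar P measX measW measY indep law \<theta>])
  have AE1: "AE \<omega> in P. \<forall>N. N \<ge> 1 \<longrightarrow> real_cond_exp P (Fsig N) (fN N) \<omega> = cN N"
  proof (subst AE_all_countable, intro allI)
    fix N :: nat
    show "AE \<omega> in P. N \<ge> 1 \<longrightarrow> real_cond_exp P (Fsig N) (fN N) \<omega> = cN N"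
    proof (cases "N \<ge> 1")
      case True
      then show ?thesis using S1[OF True] by (auto elim: AE_mp)
    next
      case False
      then show ?thesis by simp
    qed
  qed
  show ?thesis
    using AE1
  proof (rule AE_mp[OF _ AE_I2], intro impI)
    fix \<omega> assume H: "\<forall>N. N \<ge> 1 \<longrightarrow> real_cond_exp P (Fsig N) (fN N) \<omega> = cN N"
    have ev: "\<forall>\<^sub>F N in sequentially. ln (cN N) / real N =
        ln (real_cond_exp P
                    (sigma (space P)
                       {(\<lambda>\<omega>'. llr m mu S p j (Y i \<omega>')) -` A \<inter> space P | i j A.
                          i \<in> {1..N} \<and> j \<in> {1..m} \<and> A \<in> sets borel})
                    (\<lambda>\<omega>'. exp (real N * \<theta> *
                        orbgrand_metric m (Psibar m mu S p) N
                          (\<lambda>i j. llr m mu S p j (Y i \<omega>')) (\<lambda>i j. Wc i \<omega>' j)))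
                    \<omega>) / real N"
      using eventually_ge_at_top[of "1::nat"]
    proof (rule eventually_mono)
      fix N :: nat assume N: "N \<ge> 1"
      have eF: "sigma (space P)
                       {(\<lambda>\<omega>'. llr m mu S p j (Y i \<omega>')) -` A \<inter> space P | i j A.
                          i \<in> {1..N} \<and> j \<in> {1..m} \<and> A \<in> sets borel} = Fsig N"
        unfolding Fsig_def Gen_def ..
      have ef: "(\<lambda>\<omega>'. exp (real N * \<theta> *
                        orbgrand_metric m (Psibar m mu S p) N
                          (\<lambda>i j. llr m mu S p j (Y i \<omega>')) (\<lambda>i j. Wc i \<omega>' j))) = fN N"
        unfolding fN_def Tm_def ..
      show "ln (cN N) / real N = ln (real_cond_exp P
                    (sigma (space P)
                       {(\<lambda>\<omega>'. llr m mu S p j (Y i \<omega>')) -` A \<inter> space P | i j A.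
                          i \<in> {1..N} \<and> j \<in> {1..m} \<and> A \<in> sets borel})
                    (\<lambda>\<omega>'. exp (real N * \<theta> *
                        orbgrand_metric m (Psibar m mu S p) N
                          (\<lambda>i j. llr m mu S p j (Y i \<omega>')) (\<lambda>i j. Wc i \<omega>' j)))
                    \<omega>) / real N"
        unfolding eF ef using H N by simp
    qed
    show "(\<lambda>N. ln (real_cond_exp P
                    (sigma (space P)
                       {(\<lambda>\<omega>'. llr m mu S p j (Y i \<omega>')) -` A \<inter> space P | i j A.
                          i \<in> {1..N} \<and> j \<in> {1..m} \<and> A \<in> sets borel})
                    (\<lambda>\<omega>'. exp (real N * \<theta> *
                        orbgrand_metric m (Psibar m mu S p) N
                          (\<lambda>i j. llr m mu S p j (Y i \<omega>')) (\<lambda>i j. Wc i \<omega>' j)))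
                    \<omega>) / real N)
           \<longlonglongrightarrow>
           (\<Sum>j=1..m. (\<integral>y. (qbit m mu S p j 1 y + qbit m mu S p j (-1) y) / 2
                             * ln (1 + exp (\<theta> / real m * \<bar>llr m mu S p j y\<bar>)) \<partial>lborel))
             - real m * ln 2"
      using Lim_transform_eventually[OF limit ev] limit_value by simp
  qed
qed

end
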